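(* Let $\varphi\in(\tfrac34,1)$ be badly approximable and let $1<\alpha\le\tfrac32$. If $X$ is a Sturmian word generated by $\varphi$, then $X$ is a ground-state configuration of $H_\alpha$ that is stable with respect to $\mathcal{PS}_\varphi$; that is, for every finite set $P$ of patterns there exists $\lambda>0$ such that for every $(\lambda,P)$-perturbation $\widetilde H$ of $H_\alpha$ we have $\rho_{\widetilde H}(X)\le\rho_{\widetilde H}(W)$ for all $W\in\mathcal{PS}_\varphi$.
   Context: Circle $=\mathbb{R}/\mathbb{Z}$. For irrational $\varphi$, $X\in\{0,1\}^{\mathbb{Z}}$ is a Sturmian word generated by $\varphi$ if there are $x\in\mathbb{R}/\mathbb{Z}$ and $P_0\in\{[0,\varphi),(0,\varphi]\}$ with $X(n)=0$ if $x+n\varphi\in P_0$ and $X(n)=1$ otherwise. A real $\varphi$ is badly approximable if there is $c>0$ with $|\varphi-p/q|>c/q^2$ for all rationals $p/q$. Forbidden distances: $F=\{k\in\mathbb{N}: k\varphi \bmod 1\in[1-\varphi,\varphi]\}$. Fix $m\in\mathbb{N}$ such that the sequences in $\{0,1\}^{\mathbb{Z}}$ containing no $m$ consecutive $0$'s and no two $1$'s at a distance in $F$ are exactly the Sturmian words generated by $\varphi$ (such $m$ exists). A pattern is a configuration in $\{0,1\}^A$ on a finite set $A\subset\mathbb{Z}$, considered up to translation. A (translation-invariant) Hamiltonian is given by an energy function $\Phi$ on patterns; for a finite word $w$ (or a finite segment of a sequence), $H(w)$ is the sum of $\Phi(p)$ over all occurrences of patterns $p$ inside $w$. $H_\alpha$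 is the Hamiltonian assigning energy $1/n^\alpha$ to the pattern consisting of two $1$'s at distance $n$ for each $n\in F$, energy $1$ to the pattern of $m$ consecutive $0$'s, and energy $0$ to all other patterns. Energy density: $\rho_H(X)=\liminf_{k\to\infty}\frac{H(X([-k,k]))}{2k+1}$, where $X([-k,k])=(X(i))_{i=-k}^k$. For a finite set of patterns $P$ and $\lambda>0$, $\widetilde H$ (with energies $\widetilde\Phi$) is a $(\lambda,P)$-perturbation of $H$ (energies $\Phi$) if $|\Phi(p)-\widetilde\Phi(p)|<\lambda$ for $p\in P$ and $\Phi(q)=\widetilde\Phi(q)$ for $q\notin P$. $\mathcal{PS}_\varphi$ is the set of periodic sequences $Y\in\{0,1\}^{\mathbb{Z}}$ whose period word (one block of length equal to a period) is a subword of some Sturmian word generated by $\varphi$. *)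

theory Defs
  imports "HOL-Analysis.Analysis"
begin

text \<open>Configurations in {0,1}^Z are encoded as int => bool, True = symbol 1, False = symbol 0.
  Points of the circle R/Z are represented by reals, reduced with frac.\<close>

type_synonym config = "int \<Rightarrow> bool"

definition sturmian :: "real \<Rightarrow> config \<Rightarrow> bool" where
  "sturmian \<phi> X \<longleftrightarrow> (\<exists>x::real.
      (\<forall>n::int. (\<not> X n) \<longleftrightarrow> frac (x + of_int n * \<phi>) \<in> {0..<\<phi>}) \<or>
      (\<forall>n::int. (\<not> X n) \<longleftrightarrow> frac (x + of_int n * \<phi>) \<in> {0<..\<phi>}))"

definition badly_approximable :: "real \<Rightarrow> bool" where
  "badly_approximable \<phi> \<longleftrightarrow>
     (\<exists>c>0. \<forall>p::int. \<forall>q::int. q > 0 \<longrightarrow> \<bar>\<phi> - of_int p / of_int q\<bar> > c / (of_int q)\<^sup>2)"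

definition forbidden :: "real \<Rightarrow> nat set" where
  "forbidden \<phi> = {k. k \<ge> 1 \<and> frac (real k * \<phi>) \<in> {1 - \<phi>..\<phi>}}"

definition good_m :: "real \<Rightarrow> nat \<Rightarrow> bool" where
  "good_m \<phi> m \<longleftrightarrow> (\<forall>X::config.
     ((\<forall>n::int. \<not> (\<forall>i::nat. i < m \<longrightarrow> \<not> X (n + int i))) \<and>
      (\<forall>a b::int. a < b \<and> X a \<and> X b \<longrightarrow> nat (b - a) \<notin> forbidden \<phi>))
     \<longleftrightarrow> sturmian \<phi> X)"

text \<open>Patterns: partial maps int => bool option with finite nonempty domain, normalised
  (as representative of the translation class) so that the least element of the domain is 0.\<close>
type_synonym pattern = "int \<Rightarrow> bool option"

definition patterns :: "pattern set" where
  "patterns = {p. finite (dom p) \<and> dom p \<noteq> {} \<and> Min (dom p) = 0}"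

definition pat_of :: "config \<Rightarrow> int set \<Rightarrow> pattern" where
  "pat_of X B = (\<lambda>i. if i + Min B \<in> B then Some (X (i + Min B)) else None)"

text \<open>H(X([a,b])): sum of energies over all occurrences of patterns inside the segment;
  each nonempty subset B of [a,b] carries exactly one pattern occurrence.\<close>
definition ham :: "(pattern \<Rightarrow> real) \<Rightarrow> config \<Rightarrow> int \<Rightarrow> int \<Rightarrow> real" where
  "ham \<Phi> X a b = (\<Sum>B \<in> Pow {a..b} - {{}}. \<Phi> (pat_of X B))"

definition density :: "(pattern \<Rightarrow> real) \<Rightarrow> config \<Rightarrow> ereal" where
  "density \<Phi> X = liminf (\<lambda>k::nat. ereal (ham \<Phi> X (- int k) (int k) / (2 * real k + 1)))"

definition pair_pat :: "nat \<Rightarrow> pattern" where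
  "pair_pat n = (\<lambda>i. if i = 0 \<or> i = int n then Some True else None)"

definition zeros_pat :: "nat \<Rightarrow> pattern" where
  "zeros_pat m = (\<lambda>i. if 0 \<le> i \<and> i < int m then Some False else None)"

definition Phi_alpha :: "real \<Rightarrow> nat \<Rightarrow> real \<Rightarrow> pattern \<Rightarrow> real" where
  "Phi_alpha \<phi> m \<alpha> p =
     (if p = zeros_pat m then 1
      else if (\<exists>n \<in> forbidden \<phi>. p = pair_pat n)
        then 1 / (real (THE n. n \<in> forbidden \<phi> \<and> p = pair_pat n)) powr \<alpha>
      else 0)"

definition perturbation :: "real \<Rightarrow> pattern set \<Rightarrow> (pattern \<Rightarrow> real) \<Rightarrow> (pattern \<Rightarrow> real) \<Rightarrow> bool" where
  "perturbation lam P \<Phi> \<Phi>' \<longleftrightarrow>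
     (\<forall>p \<in> P. \<bar>\<Phi> p - \<Phi>' p\<bar> < lam) \<and> (\<forall>q \<in> patterns - P. \<Phi> q = \<Phi>' q)"

definition PS :: "real \<Rightarrow> config set" where
  "PS \<phi> = {Y. \<exists>p::nat. p > 0 \<and> (\<forall>n. Y (n + int p) = Y n) \<and>
     (\<exists>s::int. \<exists>Z. sturmian \<phi> Z \<and> (\<exists>j::int. \<forall>i::nat. i < p \<longrightarrow> Y (s + int i) = Z (j + int i)))}"

end

theory Submission
  imports Defs
begin

definition ee :: "real \<Rightarrow> int \<Rightarrow> real \<Rightarrow> real" where
  "ee \<phi> m t = frac t + frac (of_int m * \<phi>) - frac (t + of_int m * \<phi>)"

lemma ee_01: "ee \<phi> m t = (if frac t + frac (of_int m * \<phi>) < 1 then 0 else 1)"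
  by (simp add: ee_def frac_add)

lemma ee_mult: "ee \<phi> m t * ee \<phi> k t =
   (if frac (of_int m * \<phi>) \<le> frac (of_int k * \<phi>) then ee \<phi> m t else ee \<phi> k t)"
  unfolding ee_01 by auto

inductive gen :: "real \<Rightarrow> (real \<Rightarrow> real) \<Rightarrow> bool" for \<phi> where
  gc: "gen \<phi> (\<lambda>t. c)"
| gb: "gen \<phi> (\<lambda>t. c * ee \<phi> m t)"
| ga: "gen \<phi> f \<Longrightarrow> gen \<phi> g \<Longrightarrow> gen \<phi> (\<lambda>t. f t + g t)"

lemma gen_scale: "gen \<phi> f \<Longrightarrow> gen \<phi> (\<lambda>t. c * f t)"
proof (induction rule: gen.induct)
  case (gc c') then show ?case using gen.gc by auto
next
  case (gb c' m) then show ?case using gen.gb[of \<phi> "c*c'" m] by (simp add: mult.assoc)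
next
  case (ga f g) then show ?case using gen.ga[of \<phi> "\<lambda>t. c * f t" "\<lambda>t. c * g t"]
    by (simp add: distrib_left)
qed

lemma gen_mult_basis: "gen \<phi> g \<Longrightarrow> gen \<phi> (\<lambda>t. (c * ee \<phi> m t) * g t)"
proof (induction rule: gen.induct)
  case (gc c') then show ?case using gen.gb[of \<phi> "c*c'" m] by (simp add: algebra_simps)
next
  case (gb c' k)
  have "(\<lambda>t. (c * ee \<phi> m t) * (c' * ee \<phi> k t)) = (\<lambda>t. (c*c') * (ee \<phi> m t * ee \<phi> k t))"
    by (simp add: algebra_simps)
  also have "\<dots> = (\<lambda>t. (c*c') * ee \<phi> (if frac (of_int m * \<phi>) \<le> frac (of_int k * \<phi>) then m else k) t)"
    by (simp add: ee_mult)
  finally show ?case using gen.gb by metis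
next
  case (ga f g) then show ?case using gen.ga[of \<phi> "\<lambda>t. (c * ee \<phi> m t) * f t" "\<lambda>t. (c * ee \<phi> m t) * g t"]
    by (simp add: distrib_left)
qed

lemma gen_mult: "gen \<phi> f \<Longrightarrow> gen \<phi> g \<Longrightarrow> gen \<phi> (\<lambda>t. f t * g t)"
proof (induction rule: gen.induct)
  case (gc c) then show ?case using gen_scale by auto
next
  case (gb c m) then show ?case using gen_mult_basis by auto
next
  case (ga f g') then show ?case using gen.ga[of \<phi> "\<lambda>t. f t * g t" "\<lambda>t. g' t * g t"]
    by (simp add: distrib_right)
qed

lemma gen_prod: "finite D \<Longrightarrow> (\<And>i. i \<in> D \<Longrightarrow> gen \<phi> (h i)) \<Longrightarrow> gen \<phi> (\<lambda>t. \<Prod>i\<in>D. h i t)"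
proof (induction D rule: finite_induct)
  case empty then show ?case using gen.gc[of \<phi> 1] by simp
next
  case (insert x F)
  then show ?case using gen_mult[of \<phi> "h x" "\<lambda>t. \<Prod>i\<in>F. h i t"] by simp
qed

lemma tele_nat:
  fixes G :: "int \<Rightarrow> real"
  assumes "\<And>n. 0 \<le> G n \<and> G n < 1"
  shows "\<bar>\<Sum>n<L. G (int n) - G (int n + int k)\<bar> \<le> real k"
proof (induction k)
  case 0 then show ?case by simp
next
  case (Suc k)
  have tel: "(\<Sum>n<L. G (int n + int k) - G (int n + int (Suc k))) = G (int k) - G (int L + int k)"
  proof (induction L)
    case 0 then show ?case by simp
  next
    case (Suc L) then show ?case by (simp add: algebra_simps)
  qed
  have b: "\<bar>G (int k) - G (int L + int k)\<bar> \<le> 1" using assms[of "int k"] assms[of "int L + int k"] by linarith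
  have "(\<Sum>n<L. G (int n) - G (int n + int (Suc k))) =
     (\<Sum>n<L. G (int n) - G (int n + int k)) + (\<Sum>n<L. G (int n + int k) - G (int n + int (Suc k)))"
    by (simp add: sum.distrib[symmetric])
  then show ?case using Suc tel b by simp
qed

lemma tele:
  fixes G :: "int \<Rightarrow> real" and m :: int
  assumes "\<And>n. 0 \<le> G n \<and> G n < 1"
  shows "\<bar>\<Sum>n<L. G (int n) - G (int n + m)\<bar> \<le> \<bar>of_int m\<bar>"
proof (cases "m \<ge> 0")
  case True
  then obtain k where "m = int k" using that[of "nat m"] by simp
  then show ?thesis using tele_nat[OF assms, where L=L and k=k] by simp
next
  case False
  then obtain k where k: "m = - int k" using that[of "nat (-m)"] by simp
  define G' where "G' = (\<lambda>x. G (x - int k))"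
  have "\<bar>\<Sum>n<L. G' (int n) - G' (int n + int k)\<bar> \<le> real k"
    by (rule tele_nat) (simp add: G'_def assms)
  moreover have "(\<Sum>n<L. G (int n) - G (int n + m)) = - (\<Sum>n<L. G' (int n) - G' (int n + int k))"
    by (simp add: G'_def k sum_negf[symmetric])
  ultimately show ?thesis using k by simp
qed

lemma gen_br: "gen \<phi> f \<Longrightarrow> \<exists>F K. \<forall>t L. \<bar>(\<Sum>n<L. f (t + real n * \<phi>)) - real L * F\<bar> \<le> K"
proof (induction rule: gen.induct)
  case (gc c) then show ?case by (rule exI[of _ c]) auto
next
  case (gb c m)
  show ?case
  proof (intro exI allI)
    fix t L
    define G where "G = (\<lambda>x::int. frac (t + of_int x * \<phi>))"
    have G01: "\<And>n. 0 \<le> G n \<and> G n < 1" by (simp add: G_def frac_lt_1)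
    have pt: "c * ee \<phi> m (t + real n * \<phi>) = c * (G (int n) - G (int n + m)) + c * frac (of_int m * \<phi>)" for n
      by (simp add: ee_def G_def algebra_simps)
    have "(\<Sum>n<L. c * ee \<phi> m (t + real n * \<phi>)) =
       c * (\<Sum>n<L. G (int n) - G (int n + m)) + real L * (c * frac (of_int m * \<phi>))"
      unfolding pt by (simp add: sum.distrib sum_distrib_left)
    then show "\<bar>(\<Sum>n<L. c * ee \<phi> m (t + real n * \<phi>)) - real L * (c * frac (of_int m * \<phi>))\<bar>
        \<le> \<bar>c\<bar> * \<bar>of_int m\<bar>"
      using tele[where G=G and L=L and m=m, OF G01] by (simp add: abs_mult mult_left_mono)
  qed
next
  case (ga f g)
  then obtain F1 K1 F2 K2 where 1: "\<forall>t L. \<bar>(\<Sum>n<L. f (t + real n * \<phi>)) - real L * F1\<bar> \<le> K1"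
    and 2: "\<forall>t L. \<bar>(\<Sum>n<L. g (t + real n * \<phi>)) - real L * F2\<bar> \<le> K2" by blast
  show ?case
  proof (intro exI allI)
    fix t L
    show "\<bar>(\<Sum>n<L. f (t + real n * \<phi>) + g (t + real n * \<phi>)) - real L * (F1 + F2)\<bar> \<le> K1 + K2"
      using 1[rule_format, of t L] 2[rule_format, of t L] by (simp add: sum.distrib algebra_simps)
  qed
qed

lemma ee_shift: "ee \<phi> m (t + of_int i * \<phi>) =
   (frac (of_int i*\<phi>) + frac (of_int m*\<phi>) - frac (of_int (i+m)*\<phi>)) + ee \<phi> (i+m) t - ee \<phi> i t"
  by (simp add: ee_def algebra_simps)

lemma gen_ee_shift: "gen \<phi> (\<lambda>t. ee \<phi> m (t + of_int i * \<phi>))"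
proof -
  let ?c = "frac (of_int i*\<phi>) + frac (of_int m*\<phi>) - frac (of_int (i+m)*\<phi>)"
  have "gen \<phi> (\<lambda>t. (?c + 1 * ee \<phi> (i+m) t) + (-1) * ee \<phi> i t)"
    by (intro gen.ga gen.gc gen.gb)
  then show ?thesis by (simp add: ee_shift)
qed

lemma ee_m1: "0 < \<phi> \<Longrightarrow> \<phi> < 1 \<Longrightarrow> ee \<phi> (-1) y = (if \<phi> \<le> frac y then 1 else 0)"
proof -
  assume "0 < \<phi>" "\<phi> < 1"
  then have "frac (- \<phi>) = 1 - \<phi>"
    by (subst frac_neg) (auto simp: frac_eq elim!: Ints_cases)
  then show ?thesis by (simp add: ee_01)
qed

definition chi :: "real \<Rightarrow> pattern \<Rightarrow> real \<Rightarrow> real" where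
  "chi \<phi> q t = (\<Prod>i\<in>dom q. if q i = Some True then ee \<phi> (-1) (t + of_int i * \<phi>)
                              else 1 - ee \<phi> (-1) (t + of_int i * \<phi>))"

lemma gen_chi: "finite (dom q) \<Longrightarrow> gen \<phi> (chi \<phi> q)"
proof -
  assume f: "finite (dom q)"
  have "gen \<phi> (\<lambda>t. \<Prod>i\<in>dom q. if q i = Some True then ee \<phi> (-1) (t + of_int i * \<phi>)
                              else 1 - ee \<phi> (-1) (t + of_int i * \<phi>))"
  proof (rule gen_prod[OF f])
    fix i assume "i \<in> dom q"
    show "gen \<phi> (\<lambda>t. if q i = Some True then ee \<phi> (-1) (t + of_int i * \<phi>)
                              else 1 - ee \<phi> (-1) (t + of_int i * \<phi>))"
    proof (cases "q i = Some True")
      case True then show ?thesis using gen_ee_shift by simp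
    next
      case False
      have "gen \<phi> (\<lambda>t. 1 + (-1) * ee \<phi> (-1) (t + of_int i * \<phi>))"
        by (intro gen.ga gen.gc gen_scale gen_ee_shift)
      then show ?thesis using False by simp
    qed
  qed
  then show ?thesis unfolding chi_def[abs_def] .
qed

definition match :: "config \<Rightarrow> pattern \<Rightarrow> int \<Rightarrow> bool" where
  "match Y q s \<longleftrightarrow> (\<forall>i\<in>dom q. q i = Some (Y (s + i)))"

lemma prod_ind: "finite D \<Longrightarrow> (\<Prod>i\<in>D. if P i then 1 else (0::real)) = (if \<forall>i\<in>D. P i then 1 else 0)"
  by (induction D rule: finite_induct) auto

lemma chi_match:
  assumes "0 < \<phi>" "\<phi> < 1" "finite (dom q)"
    and cod: "\<And>i. i \<in> dom q \<Longrightarrow> Y (s + i) = (\<phi> \<le> frac (x + of_int (s+i) * \<phi>))"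
  shows "chi \<phi> q (x + of_int s * \<phi>) = (if match Y q s then 1 else 0)"
proof -
  have "chi \<phi> q (x + of_int s * \<phi>) = (\<Prod>i\<in>dom q. if q i = Some (Y (s + i)) then 1 else 0)"
    unfolding chi_def
  proof (rule prod.cong[OF refl])
    fix i assume i: "i \<in> dom q"
    have e: "x + of_int s * \<phi> + of_int i * \<phi> = x + of_int (s+i) * \<phi>" by (simp add: algebra_simps)
    obtain v where v: "q i = Some v" using i by auto
    show "(if q i = Some True then ee \<phi> (- 1) (x + of_int s * \<phi> + of_int i * \<phi>)
          else 1 - ee \<phi> (- 1) (x + of_int s * \<phi> + of_int i * \<phi>)) =
         (if q i = Some (Y (s + i)) then 1 else 0)"
      unfolding e ee_m1[OF assms(1,2)] cod[OF i] v by auto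
  qed
  also have "\<dots> = (if match Y q s then 1 else 0)"
    by (simp add: prod_ind[OF assms(3)] match_def)
  finally show ?thesis .
qed

lemma sturm_window:
  assumes st: "sturmian \<phi> X" and ph: "0 < \<phi>" "\<phi> < 1" and fin: "finite S"
  shows "\<exists>x'. \<forall>n\<in>S. X n = (\<phi> \<le> frac (x' + of_int n * \<phi>))"
proof -
  obtain x where
    c: "(\<forall>n::int. (\<not> X n) \<longleftrightarrow> frac (x + of_int n * \<phi>) \<in> {0..<\<phi>}) \<or>
        (\<forall>n::int. (\<not> X n) \<longleftrightarrow> frac (x + of_int n * \<phi>) \<in> {0<..\<phi>})"
    using st unfolding sturmian_def by blast
  show ?thesis
  proof (cases "\<forall>n::int. (\<not> X n) \<longleftrightarrow> frac (x + of_int n * \<phi>) \<in> {0..<\<phi>}")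
    case True
    have "\<forall>n\<in>S. X n = (\<phi> \<le> frac (x + of_int n * \<phi>))"
    proof
      fix n show "X n = (\<phi> \<le> frac (x + of_int n * \<phi>))"
        using True[rule_format, of n] frac_ge_0[of "x + of_int n * \<phi>"] by auto
    qed
    then show ?thesis by blast
  next
    case False
    with c have c2: "\<And>n. (\<not> X n) \<longleftrightarrow> frac (x + of_int n * \<phi>) \<in> {0<..\<phi>}" by blast
    define y where "y = (\<lambda>n::int. frac (x + of_int n * \<phi>))"
    define M where "M = {1 - \<phi>} \<union> {y n | n. n \<in> S \<and> 0 < y n} \<union> {y n - \<phi> | n. n \<in> S \<and> \<phi> < y n}"
    have finM: "finite M" unfolding M_def using fin by auto
    have Mpos: "\<forall>v\<in>M. 0 < v" unfolding M_def using ph by auto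
    define \<epsilon> where "\<epsilon> = Min M / 2"
    have Mne: "M \<noteq> {}" unfolding M_def by auto
    have epos: "0 < \<epsilon>" unfolding \<epsilon>_def using Mpos finM Mne by auto
    have ele: "\<And>v. v \<in> M \<Longrightarrow> \<epsilon> < v" unfolding \<epsilon>_def
    proof -
      fix v assume "v \<in> M"
      then have "Min M \<le> v" using finM by simp
      moreover have "0 < Min M" using Mpos finM Mne Min_in by blast
      ultimately show "Min M / 2 < v" by linarith
    qed
    have e1: "\<epsilon> < 1 - \<phi>" using ele unfolding M_def by auto
    show ?thesis
    proof (intro exI[of _ "x - \<epsilon>"] ballI)
      fix n assume nS: "n \<in> S"
      have y01: "0 \<le> y n" "y n < 1" by (auto simp: y_def frac_lt_1)
      have fe: "frac (x - \<epsilon> + of_int n * \<phi>) = frac (y n - \<epsilon>)"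
      proof -
        have "x - \<epsilon> + of_int n * \<phi> = (y n - \<epsilon>) + of_int \<lfloor>x + of_int n * \<phi>\<rfloor>"
          unfolding y_def frac_def by simp
        then show ?thesis by (metis frac_add_of_int_right)
      qed
      show "X n = (\<phi> \<le> frac (x - \<epsilon> + of_int n * \<phi>))"
      proof (cases "y n = 0")
        case True
        have "frac (y n - \<epsilon>) = 1 - \<epsilon>"
          using True epos e1 ph by (simp add: frac_neg) (auto simp: frac_eq elim!: Ints_cases)
        moreover have "X n" using c2[of n] True unfolding y_def by auto
        ultimately show ?thesis using fe e1 by simp
      next
        case False
        then have yp: "0 < y n" using y01 by simp
        then have "y n \<in> M" unfolding M_def using nS by blast
        then have "\<epsilon> < y n" using ele by blast
        then have "frac (y n - \<epsilon>) = y n - \<epsilon>" using y01 epos by (simp add: frac_eq)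
        moreover have "X n \<longleftrightarrow> \<phi> < y n" using c2[of n] yp unfolding y_def by auto
        moreover have "\<phi> < y n \<Longrightarrow> \<epsilon> < y n - \<phi>" using ele nS unfolding M_def by blast
        ultimately show ?thesis using fe epos by auto
      qed
    qed
  qed
qed

definition cnt :: "config \<Rightarrow> pattern \<Rightarrow> int \<Rightarrow> int \<Rightarrow> nat" where
  "cnt Y q a b = card {B \<in> Pow {a..b} - {{}}. pat_of Y B = q}"

lemma dom_pat_of: "dom (pat_of Y B) = (\<lambda>b. b - Min B) ` B"
proof -
  have "dom (pat_of Y B) = {i. i + Min B \<in> B}" by (auto simp: pat_of_def dom_def split: if_splits)
  also have "\<dots> = (\<lambda>b. b - Min B) ` B"
  proof (intro equalityI subsetI)
    fix i assume "i \<in> {i. i + Min B \<in> B}"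
    then show "i \<in> (\<lambda>b. b - Min B) ` B" by (intro image_eqI[of _ _ "i + Min B"]) auto
  next
    fix i assume "i \<in> (\<lambda>b. b - Min B) ` B"
    then show "i \<in> {i. i + Min B \<in> B}" by auto
  qed
  finally show ?thesis .
qed

lemma pat_of_in_patterns:
  assumes "finite B" "B \<noteq> {}" shows "pat_of Y B \<in> patterns"
proof -
  have "mono (\<lambda>b::int. b - Min B)" by (simp add: mono_def)
  then have "Min ((\<lambda>b. b - Min B) ` B) = Min B - Min B"
    using mono_Min_commute[of "\<lambda>b. b - Min B" B] assms by simp
  then have "Min (dom (pat_of Y B)) = 0" by (simp add: dom_pat_of)
  moreover have "finite (dom (pat_of Y B))" "dom (pat_of Y B) \<noteq> {}" using assms by (simp_all only: dom_pat_of) auto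
  ultimately show ?thesis unfolding patterns_def by blast
qed

definition shiftset :: "int set \<Rightarrow> int \<Rightarrow> int set" where
  "shiftset D s = (\<lambda>i. i + s) ` D"

lemma Min_shiftset: "finite D \<Longrightarrow> D \<noteq> {} \<Longrightarrow> Min (shiftset D s) = Min D + s"
proof -
  assume "finite D" "D \<noteq> {}"
  moreover have "mono (\<lambda>i::int. i + s)" by (simp add: mono_def)
  ultimately show ?thesis unfolding shiftset_def using mono_Min_commute[of "\<lambda>i. i + s" D] by simp
qed

lemma Max_shiftset: "finite D \<Longrightarrow> D \<noteq> {} \<Longrightarrow> Max (shiftset D s) = Max D + s"
proof -
  assume "finite D" "D \<noteq> {}"
  moreover have "mono (\<lambda>i::int. i + s)" by (simp add: mono_def)
  ultimately show ?thesis unfolding shiftset_def using mono_Max_commute[of "\<lambda>i. i + s" D] by simp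
qed

lemma pat_of_shift:
  assumes q: "q \<in> patterns"
  shows "pat_of Y (shiftset (dom q) s) = q \<longleftrightarrow> match Y q s"
proof -
  have f: "finite (dom q)" "dom q \<noteq> {}" "Min (dom q) = 0" using q unfolding patterns_def by auto
  have m: "Min (shiftset (dom q) s) = s" using Min_shiftset[OF f(1,2)] f(3) by simp
  have mem: "i + s \<in> shiftset (dom q) s \<longleftrightarrow> i \<in> dom q" for i unfolding shiftset_def by auto
  have e: "pat_of Y (shiftset (dom q) s) = (\<lambda>i. if i \<in> dom q then Some (Y (i + s)) else None)"
    unfolding pat_of_def m mem by simp
  have "(\<lambda>i. if i \<in> dom q then Some (Y (i + s)) else None) = q \<longleftrightarrow> match Y q s"
    unfolding match_def
  proof
    assume "(\<lambda>i. if i \<in> dom q then Some (Y (i + s)) else None) = q"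
    note eq = this
    show "\<forall>i\<in>dom q. q i = Some (Y (s + i))"
    proof
      fix i assume i: "i \<in> dom q"
      from fun_cong[OF eq, of i] i have "q i = Some (Y (i + s))" by simp
      then show "q i = Some (Y (s + i))" by (simp add: add.commute)
    qed
  next
    assume a: "\<forall>i\<in>dom q. q i = Some (Y (s + i))"
    show "(\<lambda>i. if i \<in> dom q then Some (Y (i + s)) else None) = q"
    proof
      fix i show "(if i \<in> dom q then Some (Y (i + s)) else None) = q i"
        using a by (cases "i \<in> dom q") (auto simp: add.commute domIff)
    qed
  qed
  then show ?thesis using e by simp
qed

lemma pat_of_eq_shift:
  assumes "finite B" "B \<noteq> {}" "pat_of Y B = q"
  shows "B = shiftset (dom q) (Min B)"
proof -
  have "dom q = (\<lambda>b. b - Min B) ` B" using dom_pat_of[of Y B] assms(3) by simp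
  then show ?thesis unfolding shiftset_def by (simp add: image_image)
qed

lemma cnt_eq:
  assumes q: "q \<in> patterns"
  shows "cnt Y q a b = card {s \<in> {a..b - Max (dom q)}. match Y q s}"
proof -
  have f: "finite (dom q)" "dom q \<noteq> {}" "Min (dom q) = 0" using q unfolding patterns_def by auto
  let ?d = "Max (dom q)"
  have "0 \<in> dom q" using Min_in[OF f(1,2)] f(3) by simp
  then have d0: "0 \<le> ?d" using Max_ge[OF f(1)] by simp
  have sub: "shiftset (dom q) s \<subseteq> {a..b} \<longleftrightarrow> a \<le> s \<and> s \<le> b - ?d" for s
  proof
    assume "shiftset (dom q) s \<subseteq> {a..b}"
    moreover have "0 \<in> dom q" using Min_in[OF f(1,2)] f(3) by simp
    then have "0 + s \<in> shiftset (dom q) s" unfolding shiftset_def by blast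
    moreover have "?d \<in> dom q" using Max_in[OF f(1,2)] by simp
    then have "?d + s \<in> shiftset (dom q) s" unfolding shiftset_def by blast
    ultimately show "a \<le> s \<and> s \<le> b - ?d" by auto
  next
    assume "a \<le> s \<and> s \<le> b - ?d"
    moreover have "\<forall>i\<in>dom q. 0 \<le> i \<and> i \<le> ?d" using Min_le[OF f(1)] Max_ge[OF f(1)] f(3) by auto
    ultimately show "shiftset (dom q) s \<subseteq> {a..b}" unfolding shiftset_def
    proof (intro subsetI)
      fix x assume h: "a \<le> s \<and> s \<le> b - ?d" "\<forall>i\<in>dom q. 0 \<le> i \<and> i \<le> ?d" "x \<in> (\<lambda>i. i + s) ` dom q"
      then obtain i where "i \<in> dom q" "x = i + s" by blast
      moreover have "0 \<le> i \<and> i \<le> ?d" using h(2) \<open>i \<in> dom q\<close> by blast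
      ultimately show "x \<in> {a..b}" using h(1) by simp
    qed
  qed
  have inj: "inj_on (shiftset (dom q)) UNIV"
  proof (rule inj_onI)
    fix s s' assume "shiftset (dom q) s = shiftset (dom q) s'"
    then have "Min (shiftset (dom q) s) = Min (shiftset (dom q) s')" by simp
    then show "s = s'" using Min_shiftset[OF f(1,2)] by simp
  qed
  have "{B \<in> Pow {a..b} - {{}}. pat_of Y B = q} = shiftset (dom q) ` {s \<in> {a..b - ?d}. match Y q s}"
  proof (intro equalityI subsetI)
    fix B assume B: "B \<in> {B \<in> Pow {a..b} - {{}}. pat_of Y B = q}"
    then have fB: "finite B" "B \<noteq> {}" using finite_subset by auto
    have e: "B = shiftset (dom q) (Min B)" using pat_of_eq_shift[OF fB] B by auto
    have "match Y q (Min B)" using B e pat_of_shift[OF q, of Y "Min B"] by auto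
    moreover have "Min B \<in> {a..b - ?d}" using B e sub[of "Min B"] by auto
    ultimately show "B \<in> shiftset (dom q) ` {s \<in> {a..b - ?d}. match Y q s}" using e by blast
  next
    fix B assume "B \<in> shiftset (dom q) ` {s \<in> {a..b - ?d}. match Y q s}"
    then obtain s where s: "B = shiftset (dom q) s" "s \<in> {a..b - ?d}" "match Y q s" by auto
    have "B \<noteq> {}" using s(1) f unfolding shiftset_def by auto
    then show "B \<in> {B \<in> Pow {a..b} - {{}}. pat_of Y B = q}"
      using s sub[of s] pat_of_shift[OF q, of Y s] by auto
  qed
  then show ?thesis unfolding cnt_def using card_image[OF inj_on_subset[OF inj]] by simp
qed

lemma ham_split:
  assumes fin: "finite P" and PP: "P \<subseteq> patterns" and pert: "perturbation lam P \<Phi> \<Phi>'"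
  shows "ham \<Phi>' Y a b = ham \<Phi> Y a b + (\<Sum>q\<in>P. (\<Phi>' q - \<Phi> q) * real (cnt Y q a b))"
proof -
  let ?S = "Pow {a..b} - {{}}"
  have finS: "finite ?S" by simp
  have pt: "\<Phi>' (pat_of Y B) = \<Phi> (pat_of Y B) + (\<Sum>q\<in>P. (\<Phi>' q - \<Phi> q) * of_bool (pat_of Y B = q))"
    if "B \<in> ?S" for B
  proof -
    have fB: "finite B" "B \<noteq> {}" using that finite_subset by auto
    have pin: "pat_of Y B \<in> patterns" by (rule pat_of_in_patterns[OF fB])
    show ?thesis
    proof (cases "pat_of Y B \<in> P")
      case True
      have "(\<Sum>q\<in>P. (\<Phi>' q - \<Phi> q) * of_bool (pat_of Y B = q)) = \<Phi>' (pat_of Y B) - \<Phi> (pat_of Y B)"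
        using True fin by (simp add: sum.delta' eq_commute[of "pat_of Y B"])
      then show ?thesis by simp
    next
      case False
      then have "\<Phi> (pat_of Y B) = \<Phi>' (pat_of Y B)" using pert pin unfolding perturbation_def by auto
      moreover have "(\<Sum>q\<in>P. (\<Phi>' q - \<Phi> q) * of_bool (pat_of Y B = q)) = 0"
        using False by (intro sum.neutral) auto
      ultimately show ?thesis by simp
    qed
  qed
  have "ham \<Phi>' Y a b = (\<Sum>B\<in>?S. \<Phi> (pat_of Y B) + (\<Sum>q\<in>P. (\<Phi>' q - \<Phi> q) * of_bool (pat_of Y B = q)))"
    unfolding ham_def using pt by (rule sum.cong[OF refl])
  also have "\<dots> = ham \<Phi> Y a b + (\<Sum>q\<in>P. \<Sum>B\<in>?S. (\<Phi>' q - \<Phi> q) * of_bool (pat_of Y B = q))"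
    unfolding ham_def sum.distrib by (simp add: sum.swap[of _ P])
  also have "(\<Sum>q\<in>P. \<Sum>B\<in>?S. (\<Phi>' q - \<Phi> q) * of_bool (pat_of Y B = q)) =
      (\<Sum>q\<in>P. (\<Phi>' q - \<Phi> q) * real (cnt Y q a b))"
  proof (rule sum.cong[OF refl])
    fix q
    have "(\<Sum>B\<in>?S. (\<Phi>' q - \<Phi> q) * of_bool (pat_of Y B = q)) = (\<Phi>' q - \<Phi> q) * (\<Sum>B\<in>?S. of_bool (pat_of Y B = q))"
      by (simp add: sum_distrib_left)
    also have "(\<Sum>B\<in>?S. of_bool (pat_of Y B = q) :: real) = real (card (?S \<inter> {B. pat_of Y B = q}))"
      using finS by (simp only: sum_of_bool_eq)
    also have "?S \<inter> {B. pat_of Y B = q} = {B \<in> ?S. pat_of Y B = q}" by blast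
    finally show "(\<Sum>B\<in>?S. (\<Phi>' q - \<Phi> q) * of_bool (pat_of Y B = q)) = (\<Phi>' q - \<Phi> q) * real (cnt Y q a b)"
      unfolding cnt_def .
  qed
  finally show ?thesis .
qed

lemma sum_interval_reindex: "(\<Sum>s\<in>{a..<a + int L}. f s) = (\<Sum>n<L. f (a + int n))"
proof (induction L)
  case 0 then show ?case by simp
next
  case (Suc L)
  have "{a..<a + int (Suc L)} = insert (a + int L) {a..<a + int L}" by auto
  then show ?case using Suc by (simp add: add.commute)
qed

definition brFK :: "real \<Rightarrow> pattern \<Rightarrow> real \<times> real" where
  "brFK \<phi> q = (SOME FK. \<forall>t L. \<bar>(\<Sum>n<L. chi \<phi> q (t + real n * \<phi>)) - real L * fst FK\<bar> \<le> snd FK)"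

definition brF where "brF \<phi> q = fst (brFK \<phi> q)"
definition brK where "brK \<phi> q = snd (brFK \<phi> q)"

lemma br_prop:
  assumes "finite (dom q)"
  shows "\<bar>(\<Sum>n<L. chi \<phi> q (t + real n * \<phi>)) - real L * brF \<phi> q\<bar> \<le> brK \<phi> q"
proof -
  obtain F K where "\<forall>t L. \<bar>(\<Sum>n<L. chi \<phi> q (t + real n * \<phi>)) - real L * F\<bar> \<le> K"
    using gen_br[OF gen_chi[OF assms]] by blast
  then have "\<exists>FK. \<forall>t L. \<bar>(\<Sum>n<L. chi \<phi> q (t + real n * \<phi>)) - real L * fst FK\<bar> \<le> snd FK"
    by (intro exI[of _ "(F,K)"]) simp
  from someI_ex[OF this] show ?thesis unfolding brF_def brK_def brFK_def by blast
qed

lemma pattern_facts: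
  assumes "q \<in> patterns"
  shows "finite (dom q)" "dom q \<noteq> {}" "Min (dom q) = 0" "0 \<le> Max (dom q)"
    "\<And>i. i \<in> dom q \<Longrightarrow> 0 \<le> i \<and> i \<le> Max (dom q)"
proof -
  show f: "finite (dom q)" "dom q \<noteq> {}" "Min (dom q) = 0" using assms unfolding patterns_def by auto
  have "0 \<in> dom q" using Min_in[OF f(1,2)] f(3) by simp
  then show "0 \<le> Max (dom q)" using Max_ge[OF f(1)] by simp
  show "\<And>i. i \<in> dom q \<Longrightarrow> 0 \<le> i \<and> i \<le> Max (dom q)" using Min_le[OF f(1)] Max_ge[OF f(1)] f(3) by auto
qed

lemma card_sum_bool: "finite A \<Longrightarrow> real (card {s \<in> A. P s}) = (\<Sum>s\<in>A. of_bool (P s))"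
proof -
  assume "finite A"
  then have "(\<Sum>s\<in>A. of_bool (P s)) = real (card (A \<inter> {s. P s}))" by (simp only: sum_of_bool_eq)
  moreover have "A \<inter> {s. P s} = {s \<in> A. P s}" by blast
  ultimately show ?thesis by simp
qed

lemma card_interval: "real (card {s \<in> {a..<a + int L}. P s}) = (\<Sum>n<L. of_bool (P (a + int n)))"
proof -
  have "real (card {s \<in> {a..<a + int L}. P s}) = (\<Sum>s\<in>{a..<a + int L}. of_bool (P s))"
    by (rule card_sum_bool) simp
  also have "\<dots> = (\<Sum>n<L. of_bool (P (a + int n)))" by (rule sum_interval_reindex)
  finally show ?thesis .
qed

lemma sturm_cnt:
  assumes st: "sturmian \<phi> Z" and ph: "0 < \<phi>" "\<phi> < 1" and q: "q \<in> patterns"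
  shows "\<bar>real (card {s \<in> {a..<a + int L}. match Z q s}) - real L * brF \<phi> q\<bar> \<le> brK \<phi> q"
proof -
  note pf = pattern_facts[OF q]
  let ?d = "Max (dom q)"
  obtain x' where x': "\<forall>n\<in>{a..a + int L + ?d}. Z n = (\<phi> \<le> frac (x' + of_int n * \<phi>))"
    using sturm_window[OF st ph, of "{a..a + int L + ?d}"] by auto
  have "real (card {s \<in> {a..<a + int L}. match Z q s}) = (\<Sum>s\<in>{a..<a + int L}. of_bool (match Z q s))"
    by (rule card_sum_bool) simp
  also have "\<dots> = (\<Sum>s\<in>{a..<a + int L}. chi \<phi> q (x' + of_int s * \<phi>))"
  proof (rule sum.cong[OF refl])
    fix s assume s: "s \<in> {a..<a + int L}"
    have "chi \<phi> q (x' + of_int s * \<phi>) = (if match Z q s then 1 else 0)"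
    proof (rule chi_match[OF ph pf(1)])
      fix i assume "i \<in> dom q"
      then have "s + i \<in> {a..a + int L + ?d}" using pf(5) s by force
      then show "Z (s + i) = (\<phi> \<le> frac (x' + of_int (s + i) * \<phi>))" using x' by blast
    qed
    then show "of_bool (match Z q s) = chi \<phi> q (x' + of_int s * \<phi>)" by simp
  qed
  also have "\<dots> = (\<Sum>n<L. chi \<phi> q ((x' + of_int a * \<phi>) + real n * \<phi>))"
    unfolding sum_interval_reindex by (simp add: algebra_simps)
  finally show ?thesis using br_prop[OF pf(1), where L=L and t="x' + of_int a * \<phi>" and \<phi>=\<phi>] by simp
qed

lemma cnt_window:
  assumes q: "q \<in> patterns"
  shows "real (cnt Y q (- int k) (int k)) =
      real (card {s \<in> {- int k..<- int k + int (nat (2 * int k + 1 - Max (dom q)))}. match Y q s})"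
    "real (cnt Y q (- int k) (int k)) =
     (\<Sum>n<nat (2 * int k + 1 - Max (dom q)). of_bool (match Y q (- int k + int n)))"
    "\<bar>real (nat (2 * int k + 1 - Max (dom q))) - (2 * real k + 1)\<bar> \<le> of_int (Max (dom q))"
proof -
  note pf = pattern_facts[OF q]
  let ?d = "Max (dom q)" and ?L = "nat (2 * int k + 1 - Max (dom q))"
  have "{- int k..int k - ?d} = {- int k..<- int k + int ?L}" by auto
  then show c: "real (cnt Y q (- int k) (int k)) = real (card {s \<in> {- int k..<- int k + int ?L}. match Y q s})"
    unfolding cnt_eq[OF q] by simp
  then show "real (cnt Y q (- int k) (int k)) = (\<Sum>n<?L. of_bool (match Y q (- int k + int n)))"
    by (simp only: card_interval)
  show "\<bar>real ?L - (2 * real k + 1)\<bar> \<le> of_int ?d" using pf(4) by (cases "2 * int k + 1 - ?d \<ge> 0") auto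
qed

lemma X_cnt_bound:
  assumes st: "sturmian \<phi> X" and ph: "0 < \<phi>" "\<phi> < 1" and q: "q \<in> patterns"
  shows "\<bar>real (cnt X q (- int k) (int k)) - (2 * real k + 1) * brF \<phi> q\<bar>
          \<le> brK \<phi> q + of_int (Max (dom q)) * \<bar>brF \<phi> q\<bar>"
proof -
  let ?d = "Max (dom q)" and ?L = "nat (2 * int k + 1 - Max (dom q))"
  have c: "real (cnt X q (- int k) (int k)) = real (card {s \<in> {- int k..<- int k + int ?L}. match X q s})"
    by (rule cnt_window(1)[OF q])
  have b1: "\<bar>real (card {s \<in> {- int k..<- int k + int ?L}. match X q s}) - real ?L * brF \<phi> q\<bar> \<le> brK \<phi> q"
    by (rule sturm_cnt[OF st ph q])
  have b2: "\<bar>real ?L * brF \<phi> q - (2 * real k + 1) * brF \<phi> q\<bar> \<le> of_int ?d * \<bar>brF \<phi> q\<bar>"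
  proof -
    have "\<bar>real ?L * brF \<phi> q - (2 * real k + 1) * brF \<phi> q\<bar> = \<bar>real ?L - (2 * real k + 1)\<bar> * \<bar>brF \<phi> q\<bar>"
      by (simp add: abs_mult[symmetric] left_diff_distrib)
    also have "\<dots> \<le> of_int ?d * \<bar>brF \<phi> q\<bar>" using cnt_window(3)[OF q, of k] by (simp add: mult_right_mono)
    finally show ?thesis .
  qed
  show ?thesis using b1 b2 c by linarith
qed

lemma sum_split_nat: "(\<Sum>n<p + L. f n) = (\<Sum>n<p. f n) + (\<Sum>n<L. f (p + n))" for p L :: nat
  by (induction L) (simp_all add: add.assoc)

lemma per_shift:
  fixes g :: "int \<Rightarrow> real"
  assumes per: "\<And>s. g (s + int p) = g s"
  shows "(\<Sum>n<p. g (a + int n)) = (\<Sum>n<p. g (int n))"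
proof -
  define F where "F = (\<lambda>i. \<Sum>n<p. g (i + int n))"
  have st: "F (i + 1) = F i" for i
  proof -
    have "(\<Sum>n<Suc p. g (i + int n)) = g i + (\<Sum>n<p. g (i + 1 + int n))"
      by (subst sum.lessThan_Suc_shift) (simp add: add.assoc)
    moreover have "(\<Sum>n<Suc p. g (i + int n)) = (\<Sum>n<p. g (i + int n)) + g i"
      using per[of i] by simp
    ultimately show ?thesis unfolding F_def by simp
  qed
  have "F a = F 0"
  proof (rule int_induct[where k=0 and i=a and P="\<lambda>a. F a = F 0"])
    show "F 0 = F 0" ..
    show "\<And>i. 0 \<le> i \<Longrightarrow> F i = F 0 \<Longrightarrow> F (i + 1) = F 0" using st by simp
    show "\<And>i. i \<le> 0 \<Longrightarrow> F i = F 0 \<Longrightarrow> F (i - 1) = F 0" using st[of "_ - 1"] by simp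
  qed
  then show ?thesis unfolding F_def by simp
qed

lemma periodic_sum:
  fixes g :: "int \<Rightarrow> real"
  assumes p: "p > 0" and per: "\<And>s. g (s + int p) = g s" and g01: "\<And>s. 0 \<le> g s \<and> g s \<le> 1"
  shows "\<bar>(\<Sum>n<L. g (a + int n)) - real L / real p * (\<Sum>n<p. g (b + int n))\<bar> \<le> real p"
proof -
  define S where "S = (\<Sum>n<p. g (int n))"
  have Sb: "(\<Sum>n<p. g (c + int n)) = S" for c unfolding S_def by (rule per_shift[where g=g and p=p, OF per])
  have S01: "0 \<le> S" "S \<le> real p"
  proof -
    show "0 \<le> S" unfolding S_def using g01 by (simp add: sum_nonneg)
    have "S \<le> (\<Sum>n<p. 1)" unfolding S_def using g01 by (intro sum_mono) auto
    then show "S \<le> real p" by simp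
  qed
  have "\<bar>(\<Sum>n<L. g (a + int n)) - real L / real p * S\<bar> \<le> real p" for a
  proof (induction L arbitrary: a rule: less_induct)
    case (less L)
    show ?case
    proof (cases "L < p")
      case True
      have "0 \<le> (\<Sum>n<L. g (a + int n))" using g01 by (simp add: sum_nonneg)
      moreover have "(\<Sum>n<L. g (a + int n)) \<le> (\<Sum>n<L. 1)" using g01 by (intro sum_mono) auto
      moreover have "0 \<le> real L / real p * S" using S01 by simp
      moreover have "real L / real p * S \<le> real L"
        using S01 p by (simp add: field_simps) (metis mult.commute mult_right_mono of_nat_0_le_iff)
      ultimately show ?thesis using True by simp
    next
      case False
      then obtain L' where L': "L = p + L'" by (metis le_add_diff_inverse not_less)
      have "L' < L" using L' p by simp
      from less[OF this, of "a + int p"]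
      have ih: "\<bar>(\<Sum>n<L'. g (a + int p + int n)) - real L' / real p * S\<bar> \<le> real p" .
      have "(\<Sum>n<L. g (a + int n)) = S + (\<Sum>n<L'. g (a + int p + int n))"
        unfolding L' sum_split_nat Sb by (simp add: add.assoc)
      moreover have "real L / real p * S = S + real L' / real p * S"
        using p unfolding L' by (simp add: field_simps)
      ultimately show ?thesis using ih by simp
    qed
  qed
  then show ?thesis using Sb[of b] by simp
qed

lemma abs_tri: "\<bar>x - y\<bar> \<le> a \<Longrightarrow> \<bar>y - z\<bar> \<le> b \<Longrightarrow> \<bar>x - z\<bar> \<le> a + (b::real)"
  by linarith

lemma per_int:
  assumes per: "\<And>n. W (n + int p) = W n"
  shows "W (n + j * int p) = W n"
proof -
  have "\<forall>n. W (n + j * int p) = W n"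
  proof (rule int_induct[where k=0 and i=j and P="\<lambda>j. \<forall>n. W (n + j * int p) = W n"])
    show "\<forall>n. W (n + 0 * int p) = W n" by simp
  next
    fix i :: int assume "0 \<le> i" and h: "\<forall>n. W (n + i * int p) = W n"
    show "\<forall>n. W (n + (i + 1) * int p) = W n"
    proof
      fix n
      have "W (n + (i + 1) * int p) = W ((n + i * int p) + int p)" by (simp add: algebra_simps)
      also have "\<dots> = W (n + i * int p)" by (rule per)
      finally show "W (n + (i + 1) * int p) = W n" using h by simp
    qed
  next
    fix i :: int assume "i \<le> 0" and h: "\<forall>n. W (n + i * int p) = W n"
    show "\<forall>n. W (n + (i - 1) * int p) = W n"
    proof
      fix n
      have "W (n + (i - 1) * int p) = W ((n + (i - 1) * int p) + int p)" using per by simp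
      also have "(n + (i - 1) * int p) + int p = n + i * int p" by (simp add: algebra_simps)
      finally show "W (n + (i - 1) * int p) = W n" using h by simp
    qed
  qed
  then show ?thesis by blast
qed

lemma match_per:
  assumes per: "\<And>n. W (n + int p) = W n"
  shows "match W q (s + int p) = match W q s"
proof -
  have "W (s + int p + i) = W (s + i)" for i
  proof -
    have "W (s + int p + i) = W ((s + i) + int p)" by (simp add: algebra_simps)
    also have "\<dots> = W (s + i)" by (rule per)
    finally show ?thesis .
  qed
  then show ?thesis unfolding match_def by simp
qed

lemma W_cnt_bound1:
  assumes p: "p > 0" and per: "\<And>n. W (n + int p) = W n" and q: "q \<in> patterns"
  shows "\<bar>real (cnt W q (- int k) (int k)) - (2 * real k + 1) / real p * (\<Sum>n<p. of_bool (match W q (s0 + int n)))\<bar>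
     \<le> real p + of_int (Max (dom q))"
proof -
  define g where "g = (\<lambda>s. of_bool (match W q s) :: real)"
  let ?L = "nat (2 * int k + 1 - Max (dom q))" and ?S = "\<Sum>n<p. g (s0 + int n)"
  have gp: "g (s + int p) = g s" for s unfolding g_def using match_per[of W p, OF per] by simp
  have g01: "0 \<le> g s \<and> g s \<le> 1" for s unfolding g_def by simp
  have S01: "0 \<le> ?S" "?S \<le> real p"
  proof -
    show "0 \<le> ?S" using g01 by (simp add: sum_nonneg)
    have "?S \<le> (\<Sum>n<p. 1)" using g01 by (intro sum_mono) auto
    then show "?S \<le> real p" by simp
  qed
  have c: "real (cnt W q (- int k) (int k)) = (\<Sum>n<?L. g (- int k + int n))"
    unfolding g_def by (rule cnt_window(2)[OF q])
  have b1: "\<bar>(\<Sum>n<?L. g (- int k + int n)) - real ?L / real p * ?S\<bar> \<le> real p"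
    by (rule periodic_sum[where g=g and p=p, OF p gp g01])
  have b2: "\<bar>real ?L / real p * ?S - (2 * real k + 1) / real p * ?S\<bar> \<le> of_int (Max (dom q))"
  proof -
    have "real ?L / real p * ?S - (2 * real k + 1) / real p * ?S = (real ?L - (2 * real k + 1)) * (?S / real p)"
      by (simp add: algebra_simps)
    moreover have "0 \<le> ?S / real p" using S01 by simp
    ultimately have "\<bar>real ?L / real p * ?S - (2 * real k + 1) / real p * ?S\<bar> = \<bar>real ?L - (2 * real k + 1)\<bar> * (?S / real p)"
      by (metis abs_mult abs_of_nonneg)
    also have "\<dots> \<le> of_int (Max (dom q)) * 1"
      using cnt_window(3)[OF q, of k] S01 p by (intro mult_mono) (auto simp: field_simps)
    finally show ?thesis by simp
  qed
  show ?thesis using abs_tri[OF b1 b2] c unfolding g_def by simp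
qed

lemma W_cnt_bound2:
  assumes p: "p > 0" and per: "\<And>n. W (n + int p) = W n" and q: "q \<in> patterns"
    and st: "sturmian \<phi> Z" and ph: "0 < \<phi>" "\<phi> < 1"
    and blk: "\<And>i. i < p \<Longrightarrow> W (s0 + int i) = Z (j + int i)"
  shows "\<bar>(\<Sum>n<p. of_bool (match W q (s0 + int n))) - real p * brF \<phi> q\<bar>
     \<le> brK \<phi> q + of_int (Max (dom q)) + of_int (Max (dom q)) * \<bar>brF \<phi> q\<bar>"
proof -
  note pf = pattern_facts[OF q]
  define g where "g = (\<lambda>s. of_bool (match W q s) :: real)"
  let ?d = "Max (dom q)"
  define L1 where "L1 = p - nat ?d"
  define R where "R = p - L1"
  have pL: "p = L1 + R" unfolding R_def L1_def by simp
  have Rd: "real R \<le> of_int ?d" unfolding R_def L1_def using pf(4) by linarith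
  have split: "(\<Sum>n<p. g (s0 + int n)) = (\<Sum>n<L1. g (s0 + int n)) + (\<Sum>n<R. g (s0 + int (L1 + n)))"
    by (subst pL) (rule sum_split_nat)
  have rem: "0 \<le> (\<Sum>n<R. g (s0 + int (L1 + n)))" "(\<Sum>n<R. g (s0 + int (L1 + n))) \<le> real R"
  proof -
    show "0 \<le> (\<Sum>n<R. g (s0 + int (L1 + n)))" unfolding g_def by (simp add: sum_nonneg)
    have "(\<Sum>n<R. g (s0 + int (L1 + n))) \<le> (\<Sum>n<R. 1)" unfolding g_def by (intro sum_mono) auto
    then show "(\<Sum>n<R. g (s0 + int (L1 + n))) \<le> real R" by simp
  qed
  have main: "(\<Sum>n<L1. g (s0 + int n)) = real (card {s \<in> {j..<j + int L1}. match Z q s})"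
    unfolding card_interval g_def
  proof (rule sum.cong[OF refl])
    fix n assume n: "n \<in> {..<L1}"
    have "match W q (s0 + int n) = match Z q (j + int n)"
      unfolding match_def
    proof (intro ball_cong[OF refl])
      fix i assume i: "i \<in> dom q"
      then have i0: "0 \<le> i" "i \<le> ?d" using pf(5) by auto
      have "n + nat i < p" using n i0 unfolding L1_def by simp
      then have "W (s0 + int (n + nat i)) = Z (j + int (n + nat i))" by (rule blk)
      then have "W (s0 + int n + i) = Z (j + int n + i)" using i0 by (simp add: add.assoc)
      then show "(q i = Some (W (s0 + int n + i))) = (q i = Some (Z (j + int n + i)))" by simp
    qed
    then show "of_bool (match W q (s0 + int n)) = of_bool (match Z q (j + int n))" by simp
  qed
  have b: "\<bar>real (card {s \<in> {j..<j + int L1}. match Z q s}) - real L1 * brF \<phi> q\<bar> \<le> brK \<phi> q"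
    by (rule sturm_cnt[OF st ph q])
  have b2: "\<bar>real L1 * brF \<phi> q - real p * brF \<phi> q\<bar> \<le> of_int ?d * \<bar>brF \<phi> q\<bar>"
  proof -
    have "\<bar>real L1 * brF \<phi> q - real p * brF \<phi> q\<bar> = real R * \<bar>brF \<phi> q\<bar>"
      using pL by (simp add: left_diff_distrib[symmetric] abs_mult)
    also have "\<dots> \<le> of_int ?d * \<bar>brF \<phi> q\<bar>" using Rd by (simp add: mult_right_mono)
    finally show ?thesis .
  qed
  show ?thesis using split rem main b b2 Rd unfolding g_def by linarith
qed

lemma mulmod_surj:
  fixes h k :: int
  assumes cop: "coprime h k" and k: "0 < k" and j: "j \<in> {0..<k}"
  shows "\<exists>i\<in>{0..<k}. (i * h) mod k = j"
proof -
  let ?f = "\<lambda>i. (i * h) mod k"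
  have ckh: "coprime k h" using cop coprime_commute by blast
  have inj: "inj_on ?f {0..<k}"
  proof (rule inj_onI)
    fix i i' assume i: "i \<in> {0..<k}" and i': "i' \<in> {0..<k}" and e: "(i * h) mod k = (i' * h) mod k"
    then have "k dvd i * h - i' * h" using mod_eq_dvd_iff by blast
    then have "k dvd (i - i') * h" by (simp only: left_diff_distrib)
    then have d: "k dvd (i - i')" using coprime_dvd_mult_left_iff[OF ckh] by blast
    show "i = i'"
    proof (rule ccontr)
      assume "i \<noteq> i'"
      then have "i - i' \<noteq> 0" by simp
      then have "\<bar>k\<bar> \<le> \<bar>i - i'\<bar>" using dvd_imp_le_int d by blast
      then show False using i i' k by auto
    qed
  qed
  have sub: "?f ` {0..<k} \<subseteq> {0..<k}" using k by auto
  have "?f ` {0..<k} = {0..<k}" by (rule endo_inj_surj[OF _ sub inj]) simp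
  then have "j \<in> ?f ` {0..<k}" using j by simp
  then show ?thesis by blast
qed

lemma frac_mod_div:
  fixes k :: int and y :: real assumes "0 < k"
  shows "frac (y + of_int x / of_int k) = frac (y + of_int (x mod k) / of_int k)"
proof -
  have "of_int x / of_int k = of_int (x mod k) / of_int k + (of_int (x div k) :: real)"
  proof -
    have e: "x = k * (x div k) + x mod k" by simp
    have "(of_int x :: real) = of_int k * of_int (x div k) + of_int (x mod k)"
      by (subst (1) e) (simp only: of_int_add of_int_mult)
    then show ?thesis using assms by (simp add: field_simps)
  qed
  then have "y + of_int x / of_int k = (y + of_int (x mod k) / of_int k) + of_int (x div k)" by simp
  then show ?thesis by (metis frac_add_of_int_right)
qed

lemma count_int_interval:
  "real (card {\<lceil>A\<rceil>..\<lfloor>B\<rfloor>}) \<ge> B - A - 1"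
proof -
  have "real (card {\<lceil>A\<rceil>..\<lfloor>B\<rfloor>}) = real (nat (\<lfloor>B\<rfloor> - \<lceil>A\<rceil> + 1))" by simp
  also have "\<dots> \<ge> of_int (\<lfloor>B\<rfloor> - \<lceil>A\<rceil> + 1)" by simp
  finally show ?thesis using floor_correct[of B] ceiling_correct[of A] by linarith
qed

lemma count_lower:
  fixes \<phi> c y u ell :: real and p :: nat
  assumes badly: "\<forall>p' q'::int. q' > 0 \<longrightarrow> \<bar>\<phi> - of_int p' / of_int q'\<bar> > c / (of_int q')\<^sup>2"
    and c: "c > 0" and p: "p > 0" and u: "0 \<le> u" and l: "0 \<le> ell" and ul: "u + ell \<le> 1"
  shows "c * real p * ell - 3 \<le> real (card {i \<in> {..<p}. u < frac (y + real i * \<phi>) \<and> frac (y + real i * \<phi>) < u + ell})"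
proof -
  obtain h k where cop: "coprime h k" and k0: "0 < k" and kp: "k \<le> int p"
    and hk: "\<bar>of_int k * \<phi> - of_int h\<bar> < 1 / real p"
    using Dirichlet_approx_coprime[OF p, of \<phi>] by blast
  have "\<bar>\<phi> - of_int h / of_int k\<bar> > c / (of_int k)\<^sup>2" using badly k0 by blast
  then have "of_int k * \<bar>\<phi> - of_int h / of_int k\<bar> > of_int k * (c / (of_int k)\<^sup>2)"
    using k0 by (intro mult_strict_left_mono) auto
  moreover have "of_int k * \<bar>\<phi> - of_int h / of_int k\<bar> = \<bar>of_int k * \<phi> - of_int h\<bar>"
    using k0 by (simp add: abs_mult[symmetric] field_simps)
  moreover have "of_int k * (c / (of_int k)\<^sup>2) = c / of_int k" using k0 by (simp add: power2_eq_square)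
  ultimately have "c / of_int k < 1 / real p" using hk by linarith
  then have ckp: "c * real p < of_int k" using k0 p by (simp add: field_simps)
  define A where "A = u + 1 / real p"
  define B where "B = u + ell - 1 / real p"
  define J where "J = {\<lceil>of_int k * (A - y)\<rceil>..\<lfloor>of_int k * (B - y)\<rfloor>}"
  define I where "I = {i \<in> {..<nat k}. \<exists>j\<in>J. frac (y + of_int (int i * h) / of_int k) = y + of_int j / of_int k}"
  define T where "T = {i \<in> {..<p}. u < frac (y + real i * \<phi>) \<and> frac (y + real i * \<phi>) < u + ell}"
  have Jw: "A \<le> y + of_int j / of_int k \<and> y + of_int j / of_int k \<le> B" if "j \<in> J" for j
  proof -
    have "of_int k * (A - y) \<le> of_int j" "of_int j \<le> of_int k * (B - y)"
      using that unfolding J_def by (auto simp: ceiling_le_iff le_floor_iff)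
    then show ?thesis using k0 by (auto simp: field_simps)
  qed
  have Ap: "1 / real p \<le> A" "0 \<le> A" unfolding A_def using u p by auto
  have Bp: "B \<le> 1 - 1 / real p" unfolding B_def using ul by auto
  have JI: "of_int ` J \<subseteq> (\<lambda>i. of_int k * (frac (y + of_int (int i * h) / of_int k) - y)) ` I"
  proof
    fix x assume "x \<in> (of_int ` J :: real set)"
    then obtain j where j: "j \<in> J" "x = of_int j" by blast
    obtain i where i: "i \<in> {0..<k}" "(i * h) mod k = j mod k"
      using mulmod_surj[OF cop k0, of "j mod k"] k0 by auto
    have w: "A \<le> y + of_int j / of_int k \<and> y + of_int j / of_int k \<le> B" by (rule Jw[OF j(1)])
    have pp: "0 < 1 / real p" using p by simp
    have "0 \<le> y + of_int j / of_int k" using w Ap pp by linarith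
    moreover have "y + of_int j / of_int k < 1" using w Bp pp by linarith
    ultimately have w01: "y + of_int j / of_int k \<in> {0..<1}" by simp
    have "frac (y + of_int (i * h) / of_int k) = frac (y + of_int j / of_int k)"
      using frac_mod_div[OF k0, of y "i * h"] frac_mod_div[OF k0, of y j] i(2) by simp
    also have "\<dots> = y + of_int j / of_int k" using w01 by simp
    finally have fe: "frac (y + of_int (i * h) / of_int k) = y + of_int j / of_int k" .
    have iI: "nat i \<in> I" unfolding I_def using i j(1) fe by auto
    have "x = of_int k * (frac (y + of_int (int (nat i) * h) / of_int k) - y)"
      using fe i(1) j(2) k0 by simp
    then show "x \<in> (\<lambda>i. of_int k * (frac (y + of_int (int i * h) / of_int k) - y)) ` I" using iI by blast
  qed
  have finI: "finite I" unfolding I_def by simp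
  have "card J = card (of_int ` J :: real set)" by (simp add: card_image inj_on_def)
  also have "\<dots> \<le> card ((\<lambda>i. of_int k * (frac (y + of_int (int i * h) / of_int k) - y)) ` I)"
    by (rule card_mono[OF _ JI]) (simp add: finI)
  also have "\<dots> \<le> card I" by (rule card_image_le[OF finI])
  finally have cJI: "card J \<le> card I" .
  have IT: "I \<subseteq> T"
  proof
    fix i assume "i \<in> I"
    then obtain j where i: "i < nat k" and j: "j \<in> J" and fe: "frac (y + of_int (int i * h) / of_int k) = y + of_int j / of_int k"
      unfolding I_def by blast
    have w: "A \<le> y + of_int j / of_int k \<and> y + of_int j / of_int k \<le> B" by (rule Jw[OF j])
    define \<delta> where "\<delta> = real i * (\<phi> - of_int h / of_int k)"
    have "\<delta> = (real i / of_int k) * (of_int k * \<phi> - of_int h)"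
      unfolding \<delta>_def using k0 by (simp add: field_simps)
    then have "\<bar>\<delta>\<bar> = real i / of_int k * \<bar>of_int k * \<phi> - of_int h\<bar>"
      using k0 by (simp add: abs_mult)
    also have "\<dots> \<le> 1 * \<bar>of_int k * \<phi> - of_int h\<bar>"
      using i k0 by (intro mult_right_mono) (auto simp: field_simps)
    finally have d: "\<bar>\<delta>\<bar> < 1 / real p" using hk by simp
    have "y + real i * \<phi> = (y + of_int (int i * h) / of_int k) + \<delta>"
      unfolding \<delta>_def using k0 by (simp add: field_simps)
    also have "\<dots> = (frac (y + of_int (int i * h) / of_int k) + \<delta>) + of_int \<lfloor>y + of_int (int i * h) / of_int k\<rfloor>"
      by (simp add: frac_def)
    finally have "frac (y + real i * \<phi>) = frac (frac (y + of_int (int i * h) / of_int k) + \<delta>)"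
      by (metis frac_add_of_int_right)
    also have "\<dots> = y + of_int j / of_int k + \<delta>"
      unfolding fe using w d Ap Bp u ul unfolding A_def B_def by (subst frac_eq_id) auto
    finally have fr: "frac (y + real i * \<phi>) = y + of_int j / of_int k + \<delta>" .
    have "i < p" using i kp by linarith
    then show "i \<in> T" unfolding T_def using fr w d unfolding A_def B_def by auto
  qed
  have "card I \<le> card T" by (rule card_mono[OF _ IT]) (simp add: T_def)
  with cJI have cJT: "real (card J) \<le> real (card T)" by simp
  have "real (card J) \<ge> of_int k * (B - y) - of_int k * (A - y) - 1" unfolding J_def by (rule count_int_interval)
  moreover have "of_int k * (B - y) - of_int k * (A - y) - 1 = of_int k * ell - 2 * of_int k / real p - 1"
    unfolding A_def B_def by (simp add: field_simps)
  moreover have "2 * of_int k / real p \<le> 2" using kp p by (simp add: field_simps)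
  moreover have "c * real p * ell \<le> of_int k * ell" using ckp l by (simp add: mult_right_mono)
  ultimately show ?thesis using cJT unfolding T_def by linarith
qed

lemma Phi_nonneg: "0 \<le> Phi_alpha \<phi> m \<alpha> p"
  unfolding Phi_alpha_def by simp

lemma pair_pat_inj: "1 \<le> n \<Longrightarrow> pair_pat n = pair_pat n' \<Longrightarrow> n = n'"
proof -
  assume n: "1 \<le> n" and e: "pair_pat n = pair_pat n'"
  have "pair_pat n (int n) = Some True" unfolding pair_pat_def by simp
  then have "pair_pat n' (int n) = Some True" using e by simp
  then have "int n = 0 \<or> int n = int n'" unfolding pair_pat_def by (auto split: if_splits)
  then show "n = n'" using n by auto
qed

lemma Phi_pair:
  assumes n: "n \<in> forbidden \<phi>"
  shows "Phi_alpha \<phi> m \<alpha> (pair_pat n) = 1 / real n powr \<alpha>"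
proof -
  have n1: "1 \<le> n" using n unfolding forbidden_def by simp
  have "pair_pat n \<noteq> zeros_pat m"
  proof
    assume "pair_pat n = zeros_pat m"
    then have "pair_pat n 0 = zeros_pat m 0" by simp
    then show False unfolding pair_pat_def zeros_pat_def by (auto split: if_splits)
  qed
  moreover have "(THE n'. n' \<in> forbidden \<phi> \<and> pair_pat n = pair_pat n') = n"
    using n pair_pat_inj[OF n1] by (intro the_equality) auto
  moreover have "\<exists>n'\<in>forbidden \<phi>. pair_pat n = pair_pat n'" using n by blast
  ultimately show ?thesis unfolding Phi_alpha_def by simp
qed

lemma pat_of_val:
  assumes e: "pat_of Y B = q" and i: "i \<in> dom q"
  shows "q i = Some (Y (i + Min B))"
proof -
  have "pat_of Y B i \<noteq> None" using e i by (simp add: domIff)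
  then have "i + Min B \<in> B" unfolding pat_of_def by (cases "i + Min B \<in> B") simp_all
  then show ?thesis using e[symmetric] unfolding pat_of_def by simp
qed

lemma Phi_X_zero:
  assumes gm: "good_m \<phi> m" and st: "sturmian \<phi> X"
  shows "Phi_alpha \<phi> m \<alpha> (pat_of X B) = 0"
proof -
  have gmX: "(\<forall>n::int. \<not> (\<forall>i::nat. i < m \<longrightarrow> \<not> X (n + int i))) \<and>
      (\<forall>a b::int. a < b \<and> X a \<and> X b \<longrightarrow> nat (b - a) \<notin> forbidden \<phi>)"
  proof -
    have "\<forall>X. ((\<forall>n::int. \<not> (\<forall>i::nat. i < m \<longrightarrow> \<not> X (n + int i))) \<and>
      (\<forall>a b::int. a < b \<and> X a \<and> X b \<longrightarrow> nat (b - a) \<notin> forbidden \<phi>)) \<longleftrightarrow> sturmian \<phi> X"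
      using gm unfolding good_m_def .
    then have "((\<forall>n::int. \<not> (\<forall>i::nat. i < m \<longrightarrow> \<not> X (n + int i))) \<and>
      (\<forall>a b::int. a < b \<and> X a \<and> X b \<longrightarrow> nat (b - a) \<notin> forbidden \<phi>)) \<longleftrightarrow> sturmian \<phi> X"
      by (rule spec)
    then show ?thesis using st by (rule iffD2)
  qed
  then have nz: "\<And>n::int. \<not> (\<forall>i::nat. i < m \<longrightarrow> \<not> X (n + int i))"
    and nf: "\<And>a b::int. a < b \<Longrightarrow> X a \<Longrightarrow> X b \<Longrightarrow> nat (b - a) \<notin> forbidden \<phi>"
    by blast+
  have z: "pat_of X B \<noteq> zeros_pat m"
  proof
    assume e: "pat_of X B = zeros_pat m"
    have "\<not> X (Min B + int i)" if i: "i < m" for i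
    proof -
      have "int i \<in> dom (zeros_pat m)" using i unfolding zeros_pat_def by (simp add: domIff)
      then have "zeros_pat m (int i) = Some (X (int i + Min B))" by (rule pat_of_val[OF e])
      moreover have "zeros_pat m (int i) = Some False" using i unfolding zeros_pat_def by simp
      ultimately have "\<not> X (int i + Min B)" by simp
      moreover have "int i + Min B = Min B + int i" by simp
      ultimately show ?thesis by simp
    qed
    then show False using nz[of "Min B"] by blast
  qed
  have pp: "pat_of X B \<noteq> pair_pat n" if n: "n \<in> forbidden \<phi>" for n
  proof
    assume e: "pat_of X B = pair_pat n"
    have n1: "1 \<le> n" using n unfolding forbidden_def by simp
    have d0: "0 \<in> dom (pair_pat n)" and dn: "int n \<in> dom (pair_pat n)" unfolding pair_pat_def by (simp_all add: domIff)
    have "pair_pat n 0 = Some (X (0 + Min B))" by (rule pat_of_val[OF e d0])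
    then have x1: "X (Min B)" unfolding pair_pat_def by simp
    have "pair_pat n (int n) = Some (X (int n + Min B))" by (rule pat_of_val[OF e dn])
    then have x2: "X (int n + Min B)" unfolding pair_pat_def by simp
    have "Min B < int n + Min B" using n1 by simp
    then have "nat (int n + Min B - Min B) \<notin> forbidden \<phi>" using nf x1 x2 by blast
    then show False using n by simp
  qed
  have "\<not> (\<exists>n\<in>forbidden \<phi>. pat_of X B = pair_pat n)" using pp by blast
  then show ?thesis unfolding Phi_alpha_def using z by simp
qed

lemma ham_X_zero:
  assumes gm: "good_m \<phi> m" and st: "sturmian \<phi> X"
  shows "ham (Phi_alpha \<phi> m \<alpha>) X a b = 0"
  unfolding ham_def using Phi_X_zero[OF gm st] by simp

lemma pat_of_shiftset_per:
  assumes per: "\<And>n. W (n + int p) = W n" and fin: "finite B" "B \<noteq> {}"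
  shows "pat_of W (shiftset B (j * int p)) = pat_of W B"
proof
  fix i
  have m: "Min (shiftset B (j * int p)) = Min B + j * int p" by (rule Min_shiftset[OF fin])
  have mem: "i + (Min B + j * int p) \<in> shiftset B (j * int p) \<longleftrightarrow> i + Min B \<in> B"
    unfolding shiftset_def by force
  have w: "W (i + (Min B + j * int p)) = W (i + Min B)"
    using per_int[of W p, OF per, of "i + Min B" j] by (simp add: add.assoc)
  show "pat_of W (shiftset B (j * int p)) i = pat_of W B i"
    unfolding pat_of_def m mem w ..
qed

lemma window_energy:
  fixes \<Phi> :: "pattern \<Rightarrow> real"
  assumes nn: "\<And>q. 0 \<le> \<Phi> q" and p: "p > 0" and per: "\<And>n. W (n + int p) = W n"
    and finV: "finite V" and V: "\<And>B. B \<in> V \<Longrightarrow> finite B \<and> B \<noteq> {} \<and> B \<subseteq> {s0..s0 + R} \<and> Min B < s0 + int p"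
  shows "((2 * real k - of_int R) / real p - 1) * (\<Sum>B\<in>V. \<Phi> (pat_of W B)) \<le> ham \<Phi> W (- int k) (int k)"
proof -
  define E where "E = (\<Sum>B\<in>V. \<Phi> (pat_of W B))"
  have E0: "0 \<le> E" unfolding E_def using nn by (simp add: sum_nonneg)
  define lo where "lo = \<lceil>(- real k - of_int s0) / real p\<rceil>"
  define hi where "hi = \<lfloor>(real k - of_int R - of_int s0) / real p\<rfloor>"
  define J where "J = {lo..hi}"
  have cJ: "real (card J) \<ge> (2 * real k - of_int R) / real p - 1"
  proof -
    have "real (card J) \<ge> (real k - of_int R - of_int s0) / real p - (- real k - of_int s0) / real p - 1"
      unfolding J_def lo_def hi_def by (rule count_int_interval)
    moreover have "(real k - of_int R - of_int s0) / real p - (- real k - of_int s0) / real p = (2 * real k - of_int R) / real p"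
    proof -
      have "(real k - of_int R - of_int s0) / real p - (- real k - of_int s0) / real p
          = ((real k - of_int R - of_int s0) - (- real k - of_int s0)) / real p"
        by (rule diff_divide_distrib[symmetric])
      also have "(real k - of_int R - of_int s0) - (- real k - of_int s0) = 2 * real k - of_int R" by simp
      finally show ?thesis .
    qed
    ultimately show ?thesis by simp
  qed
  have Jb: "- int k \<le> s0 + j * int p \<and> s0 + j * int p + R \<le> int k" if "j \<in> J" for j
  proof -
    have "(- real k - of_int s0) / real p \<le> of_int j" "of_int j \<le> (real k - of_int R - of_int s0) / real p"
      using that unfolding J_def lo_def hi_def by (auto simp: ceiling_le_iff le_floor_iff)
    then have "- real k - of_int s0 \<le> of_int j * real p" "of_int j * real p \<le> real k - of_int R - of_int s0"
      using p by (auto simp: field_simps)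
    then have "(of_int (- int k - s0) :: real) \<le> of_int (j * int p)" "(of_int (j * int p) :: real) \<le> of_int (int k - R - s0)"
      by simp_all
    then have "- int k - s0 \<le> j * int p" "j * int p \<le> int k - R - s0" by (simp_all only: of_int_le_iff)
    then show ?thesis by linarith
  qed
  define sh where "sh = (\<lambda>(j, B). shiftset B (j * int p))"
  have inj: "inj_on sh (J \<times> V)"
  proof (rule inj_onI)
    fix x y assume x: "x \<in> J \<times> V" and y: "y \<in> J \<times> V" and e: "sh x = sh y"
    obtain j B where xj: "x = (j, B)" by (cases x)
    obtain j' B' where yj: "y = (j', B')" by (cases y)
    have B: "B \<in> V" "B' \<in> V" using x y xj yj by simp_all
    have fB: "finite B" "B \<noteq> {}" "finite B'" "B' \<noteq> {}" using V[OF B(1)] V[OF B(2)] by simp_all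
    have e': "shiftset B (j * int p) = shiftset B' (j' * int p)" using e xj yj sh_def by simp
    then have "Min (shiftset B (j * int p)) = Min (shiftset B' (j' * int p))" by simp
    then have eq: "Min B + j * int p = Min B' + j' * int p" using Min_shiftset[OF fB(1,2)] Min_shiftset[OF fB(3,4)] by simp
    have m1: "Min B \<in> B" using Min_in[OF fB(1,2)] .
    have m2: "Min B' \<in> B'" using Min_in[OF fB(3,4)] .
    have b1: "s0 \<le> Min B" "Min B < s0 + int p" using V[OF B(1)] m1 by auto
    have b2: "s0 \<le> Min B'" "Min B' < s0 + int p" using V[OF B(2)] m2 by auto
    have d: "(j - j') * int p = Min B' - Min B" using eq by (simp add: algebra_simps)
    have jj: "j = j'"
    proof (rule ccontr)
      assume "j \<noteq> j'"
      then have "1 \<le> j - j' \<or> 1 \<le> j' - j" by linarith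
      then show False
      proof
        assume "1 \<le> j - j'"
        then have "1 * int p \<le> (j - j') * int p" by (rule mult_right_mono) simp
        then show False using d b1 b2 by linarith
      next
        assume "1 \<le> j' - j"
        then have "1 * int p \<le> (j' - j) * int p" by (rule mult_right_mono) simp
        moreover have "(j' - j) * int p = - ((j - j') * int p)" by (simp add: algebra_simps)
        ultimately show False using d b1 b2 by linarith
      qed
    qed
    have "B = B'"
    proof -
      have "(\<lambda>i. i + j' * int p) ` B = (\<lambda>i. i + j' * int p) ` B'"
        using e' jj unfolding shiftset_def by simp
      moreover have "inj (\<lambda>i::int. i + j' * int p)" by (simp add: inj_def)
      ultimately show ?thesis by (simp add: inj_image_eq_iff)
    qed
    then show "x = y" using xj yj jj by simp
  qed
  have sub: "sh ` (J \<times> V) \<subseteq> Pow {- int k..int k} - {{}}"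
  proof
    fix U assume "U \<in> sh ` (J \<times> V)"
    then obtain j B where jB: "j \<in> J" "B \<in> V" "U = shiftset B (j * int p)" unfolding sh_def by auto
    have "B \<subseteq> {s0..s0 + R}" "B \<noteq> {}" using V[OF jB(2)] by auto
    then show "U \<in> Pow {- int k..int k} - {{}}"
      using Jb[OF jB(1)] jB(3) unfolding shiftset_def by force
  qed
  have "ham \<Phi> W (- int k) (int k) \<ge> (\<Sum>U\<in>sh ` (J \<times> V). \<Phi> (pat_of W U))"
    unfolding ham_def by (rule sum_mono2[OF _ sub]) (auto simp: nn)
  also have "(\<Sum>U\<in>sh ` (J \<times> V). \<Phi> (pat_of W U)) = (\<Sum>x\<in>J \<times> V. \<Phi> (pat_of W (sh x)))"
    by (rule sum.reindex[OF inj, unfolded comp_def])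
  also have "\<dots> = (\<Sum>x\<in>J \<times> V. \<Phi> (pat_of W (snd x)))"
  proof (rule sum.cong[OF refl])
    fix x assume "x \<in> J \<times> V"
    then obtain j B where "x = (j, B)" "B \<in> V" by auto
    then show "\<Phi> (pat_of W (sh x)) = \<Phi> (pat_of W (snd x))"
      unfolding sh_def using pat_of_shiftset_per[where W=W and p=p and B=B and j=j, OF per] V by auto
  qed
  also have "\<dots> = (\<Sum>j\<in>J. \<Sum>B\<in>V. \<Phi> (pat_of W B))"
    by (subst sum.cartesian_product) (simp add: case_prod_beta)
  also have "\<dots> = real (card J) * E"
    unfolding E_def by simp
  finally have h: "real (card J) * E \<le> ham \<Phi> W (- int k) (int k)" .
  have "((2 * real k - of_int R) / real p - 1) * E \<le> real (card J) * E"
    using cJ E0 by (rule mult_right_mono)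
  then show ?thesis using h unfolding E_def by linarith
qed

lemma inv_le_real: "0 < A \<Longrightarrow> A \<le> B \<Longrightarrow> 1 / B \<le> 1 / (A::real)"
  by (rule divide_left_mono) (auto intro: mult_pos_pos)

lemma pat_pair:
  assumes xy: "x < y" and W: "W x" "W y"
  shows "pat_of W {x, y} = pair_pat (nat (y - x))"
proof
  fix i
  have m: "Min {x, y} = x" using xy by simp
  have mem: "i + x \<in> {x, y} \<longleftrightarrow> i = 0 \<or> i = int (nat (y - x))" using xy by auto
  show "pat_of W {x, y} i = pair_pat (nat (y - x)) i"
  proof (cases "i = 0 \<or> i = int (nat (y - x))")
    case True
    then have "W (i + x)" using W xy by auto
    then show ?thesis unfolding pat_of_def pair_pat_def m using mem True by simp
  next
    case False
    then show ?thesis unfolding pat_of_def pair_pat_def m using mem by simp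
  qed
qed

lemma viol:
  fixes \<phi> y \<theta> v :: real and p k a b :: nat and r z :: int
  assumes ph: "0 < \<phi>" "\<phi> < 1" and p: "p > 0" and per: "\<And>n. W (n + int p) = W n"
    and blk: "\<And>i. i < p \<Longrightarrow> W (s0 + int i) = (\<phi> \<le> frac (y + real i * \<phi>))"
    and k: "1 \<le> k" and a: "a < p" and b: "b < p"
    and Wa: "\<phi> \<le> frac (y + real a * \<phi>)" and Wb: "\<phi> \<le> frac (y + real b * \<phi>)"
    and th: "\<theta> = real p * \<phi> - of_int r"
    and v: "v = frac (y + real b * \<phi>) - frac (y + real a * \<phi>) + real k * \<theta> + of_int z"
    and v1: "1 - \<phi> \<le> v" and v2: "v \<le> \<phi>"
  shows "k * p + b - a \<in> forbidden \<phi> \<and>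
         Phi_alpha \<phi> m \<alpha> (pat_of W {s0 + int a, s0 + int (k * p + b)}) = 1 / real (k * p + b - a) powr \<alpha>"
proof -
  have kp: "p \<le> k * p" using k by simp
  define n where "n = k * p + b - a"
  have n1: "1 \<le> n" unfolding n_def using a kp by linarith
  have ak: "a \<le> k * p + b" using a kp by linarith
  have "real n = real (k * p + b) - real a" unfolding n_def by (rule of_nat_diff[OF ak])
  then have rn: "real n = real k * real p + real b - real a" by simp
  have "real n * \<phi> = v + of_int (int k * r + \<lfloor>y + real b * \<phi>\<rfloor> - \<lfloor>y + real a * \<phi>\<rfloor> - z)"
    unfolding rn v th frac_def by (simp add: algebra_simps)
  then have "frac (real n * \<phi>) = frac v" by (metis frac_add_of_int_right)
  also have "\<dots> = v" using v1 v2 ph by (simp add: frac_eq)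
  finally have fn: "frac (real n * \<phi>) = v" .
  have nF: "n \<in> forbidden \<phi>" unfolding forbidden_def using n1 fn v1 v2 by simp
  have W1: "W (s0 + int a)" using blk[OF a] Wa by simp
  have "W (s0 + int (k * p + b)) = W ((s0 + int b) + int k * int p)" by (simp add: algebra_simps)
  also have "\<dots> = W (s0 + int b)" by (rule per_int[where W=W and p=p, OF per])
  finally have W2: "W (s0 + int (k * p + b))" using blk[OF b] Wb by simp
  have lt: "s0 + int a < s0 + int (k * p + b)" using a kp by linarith
  have "int (k * p + b - a) = int (k * p + b) - int a" by (rule of_nat_diff[OF ak])
  then have e: "s0 + int (k * p + b) - (s0 + int a) = int n" unfolding n_def by simp
  have "nat (s0 + int (k * p + b) - (s0 + int a)) = n" by (simp only: e nat_int)
  then have "pat_of W {s0 + int a, s0 + int (k * p + b)} = pair_pat n"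
    using pat_pair[OF lt W1 W2] by simp
  then show ?thesis using Phi_pair[OF nF, of m \<alpha>] nF unfolding n_def by simp
qed

lemma pairs_energy:
  fixes \<phi> \<alpha> :: real and N p :: nat
  assumes finK: "finite Ks" and K1: "\<And>k. k \<in> Ks \<Longrightarrow> 1 \<le> k \<and> (k + 1) * p \<le> N"
    and AB: "\<And>k. k \<in> Ks \<Longrightarrow> A k \<subseteq> {..<p} \<and> Bs k \<subseteq> {..<p}"
    and vi: "\<And>k a b. k \<in> Ks \<Longrightarrow> a \<in> A k \<Longrightarrow> b \<in> Bs k \<Longrightarrow> k * p + b - a \<in> forbidden \<phi> \<and>
         Phi_alpha \<phi> m \<alpha> (pat_of W {s0 + int a, s0 + int (k * p + b)}) = 1 / real (k * p + b - a) powr \<alpha>"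
    and al: "0 < \<alpha>"
  shows "\<exists>V R. finite V \<and> 0 \<le> R \<and> (\<forall>B\<in>V. finite B \<and> B \<noteq> {} \<and> B \<subseteq> {s0..s0 + R} \<and> Min B < s0 + int p) \<and>
     (\<Sum>k\<in>Ks. real (card (A k) * card (Bs k))) / real N powr \<alpha> \<le> (\<Sum>B\<in>V. Phi_alpha \<phi> m \<alpha> (pat_of W B))"
proof -
  define S where "S = Sigma Ks (\<lambda>k. A k \<times> Bs k)"
  define g where "g = (\<lambda>(k, a, b). {s0 + int a, s0 + int (k * p + b)})"
  have fAB: "finite (A k) \<and> finite (Bs k)" if "k \<in> Ks" for k
    using AB[OF that] by (meson finite_lessThan finite_subset)
  have finS: "finite S" unfolding S_def using finK AB by (intro finite_SigmaI) (auto intro: finite_subset)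
  have Sm: "k \<in> Ks \<and> a < p \<and> b < p" if "(k, a, b) \<in> S" for k a b
    using that AB unfolding S_def by auto
  have lt: "s0 + int a < s0 + int (k * p + b)" if "(k, a, b) \<in> S" for k a b
  proof -
    have "1 \<le> k" "a < p" using Sm[OF that] K1 by auto
    then have "p \<le> k * p" by simp
    then show ?thesis using \<open>a < p\<close> by linarith
  qed
  have inj: "inj_on g S"
  proof (rule inj_onI)
    fix x x' assume x: "x \<in> S" and x': "x' \<in> S" and e: "g x = g x'"
    obtain k a b where xk: "x = (k, a, b)" by (cases x) auto
    obtain k' a' b' where xk': "x' = (k', a', b')" by (cases x') auto
    have l1: "s0 + int a < s0 + int (k * p + b)" using lt x xk by simp
    have l2: "s0 + int a' < s0 + int (k' * p + b')" using lt x' xk' by simp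
    have e': "{s0 + int a, s0 + int (k * p + b)} = {s0 + int a', s0 + int (k' * p + b')}"
      using e xk xk' g_def by simp
    then have "Min {s0 + int a, s0 + int (k * p + b)} = Min {s0 + int a', s0 + int (k' * p + b')}" by simp
    then have aa: "a = a'" using l1 l2 by simp
    from e' have Me: "Max {s0 + int a, s0 + int (k * p + b)} = Max {s0 + int a', s0 + int (k' * p + b')}" by simp
    have M1: "Max {s0 + int a, s0 + int (k * p + b)} = s0 + int (k * p + b)" using l1 by (simp add: max_def)
    have M2: "Max {s0 + int a', s0 + int (k' * p + b')} = s0 + int (k' * p + b')" using l2 by (simp add: max_def)
    have "s0 + int (k * p + b) = s0 + int (k' * p + b')" using Me unfolding M1 M2 .
    then have "int (k * p + b) = int (k' * p + b')" by (rule add_left_imp_eq)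
    then have "k * p + b = k' * p + b'" by (rule of_nat_eq_iff[THEN iffD1])
    moreover have "b < p" "b' < p" using Sm x x' xk xk' by auto
    ultimately have "k = k'" "b = b'"
      by (metis add.commute div_mult_self1 div_less add_0 less_nat_zero_code mod_mult_self1 mod_less)+
    then show "x = x'" using xk xk' aa by simp
  qed
  define V where "V = g ` S"
  have finV: "finite V" unfolding V_def using finS by simp
  have Vp: "\<forall>B\<in>V. finite B \<and> B \<noteq> {} \<and> B \<subseteq> {s0..s0 + int N} \<and> Min B < s0 + int p"
  proof
    fix B assume "B \<in> V"
    then obtain k a b where kab: "(k, a, b) \<in> S" "B = {s0 + int a, s0 + int (k * p + b)}"
      unfolding V_def g_def by auto
    have h: "k \<in> Ks" "a < p" "b < p" using Sm[OF kab(1)] by auto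
    have "(k + 1) * p \<le> N" using K1[OF h(1)] by simp
    then have kN: "k * p + b \<le> N" using h by (simp add: algebra_simps)
    have "1 \<le> k" using K1[OF h(1)] by simp
    then have "p \<le> k * p" by simp
    then have "a \<le> N" using kN h by linarith
    then have i1: "int a \<le> int N" by simp
    have i2: "int k * int p + int b \<le> int N" using kN by (metis of_nat_add of_nat_le_iff of_nat_mult)
    show "finite B \<and> B \<noteq> {} \<and> B \<subseteq> {s0..s0 + int N} \<and> Min B < s0 + int p"
      using kab(2) lt[OF kab(1)] h i1 i2 by auto
  qed
  have "(\<Sum>B\<in>V. Phi_alpha \<phi> m \<alpha> (pat_of W B)) = (\<Sum>x\<in>S. Phi_alpha \<phi> m \<alpha> (pat_of W (g x)))"
    unfolding V_def by (rule sum.reindex[OF inj, unfolded comp_def])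
  also have "\<dots> \<ge> (\<Sum>x\<in>S. 1 / real N powr \<alpha>)"
  proof (rule sum_mono)
    fix x assume x: "x \<in> S"
    obtain k a b where xk: "x = (k, a, b)" by (cases x) auto
    have h: "k \<in> Ks" "a \<in> A k" "b \<in> Bs k" using x xk unfolding S_def by auto
    have v: "Phi_alpha \<phi> m \<alpha> (pat_of W (g x)) = 1 / real (k * p + b - a) powr \<alpha>"
      using vi[OF h] xk g_def by simp
    have n1: "1 \<le> k * p + b - a" using vi[OF h] unfolding forbidden_def by simp
    have "(k + 1) * p \<le> N" using K1[OF h(1)] by simp
    moreover have "b < p" using Sm x xk by auto
    ultimately have nN: "k * p + b - a \<le> N" by (simp add: algebra_simps)
    have rN: "real (k * p + b - a) \<le> real N" using nN by (simp only: of_nat_le_iff)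
    have "real (k * p + b - a) powr \<alpha> \<le> real N powr \<alpha>"
      by (rule powr_mono2[OF _ _ rN]) (use al in auto)
    moreover have "0 < real (k * p + b - a) powr \<alpha>"
    proof -
      have "0 < k * p + b - a" using n1 by simp
      then have pos: "(0::real) < real (k * p + b - a)" by (simp only: of_nat_0_less_iff)
      show ?thesis by (simp only: powr_gt_zero) (use pos in linarith)
    qed
    ultimately have "1 / real N powr \<alpha> \<le> 1 / real (k * p + b - a) powr \<alpha>"
      by (rule inv_le_real[rotated])
    then show "1 / real N powr \<alpha> \<le> Phi_alpha \<phi> m \<alpha> (pat_of W (g x))" using v by simp
  qed
  finally have ge: "real (card S) / real N powr \<alpha> \<le> (\<Sum>B\<in>V. Phi_alpha \<phi> m \<alpha> (pat_of W B))" by simp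
  have "card S = (\<Sum>k\<in>Ks. card (A k \<times> Bs k))"
    unfolding S_def using finK fAB by (intro card_SigmaI) auto
  then have "real (card S) = (\<Sum>k\<in>Ks. real (card (A k) * card (Bs k)))" by (simp add: card_cartesian_product)
  then show ?thesis using finV Vp ge by (intro exI[of _ V] exI[of _ "int N"]) simp
qed

lemma numeric2:
  fixes K p :: nat and c \<beta> \<alpha> X :: real
  assumes K: "1 \<le> K" and p: "1 \<le> p" and c: "0 < c" and b: "0 < \<beta>" and Kb: "real K \<le> \<beta> * real p / c"
    and a1: "1 < \<alpha>" and a2: "\<alpha> \<le> 3/2" and X: "0 \<le> X"
  shows "X\<^sup>2 / 2 * 2 powr (-\<alpha>) * (\<beta> / c) powr (1 - \<alpha>) \<le> (real K / 2) * (X * real p)\<^sup>2 / (2 * real K * real p) powr \<alpha>"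
proof -
  define Kr where "Kr = real K"
  define pr where "pr = real p"
  have Kp: "0 < Kr" and pp: "0 < pr" using K p unfolding Kr_def pr_def by auto
  have e1: "(2 * Kr * pr) powr \<alpha> = 2 powr \<alpha> * Kr powr \<alpha> * pr powr \<alpha>" by (simp add: powr_mult)
  have e2: "Kr powr (1 - \<alpha>) = Kr / Kr powr \<alpha>" using Kp by (simp add: powr_diff powr_one)
  have e3: "pr powr (2 - \<alpha>) = pr\<^sup>2 / pr powr \<alpha>" using pp by (simp add: powr_diff)
  have e4: "2 powr (-\<alpha>) = 1 / 2 powr \<alpha>" by (simp add: powr_minus divide_inverse)
  have pos: "0 < 2 powr \<alpha>" "0 < Kr powr \<alpha>" "0 < pr powr \<alpha>" using Kp pp by auto
  have R: "(Kr / 2) * (X * pr)\<^sup>2 / (2 * Kr * pr) powr \<alpha> = X\<^sup>2 / 2 * 2 powr (-\<alpha>) * Kr powr (1 - \<alpha>) * pr powr (2 - \<alpha>)"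
    unfolding e1 e2 e3 e4 using pos by (simp add: field_simps power2_eq_square)
  have "(\<beta> * pr / c) powr (1 - \<alpha>) \<le> Kr powr (1 - \<alpha>)"
    using Kb Kp a1 unfolding Kr_def pr_def by (intro powr_mono2') auto
  moreover have "(\<beta> * pr / c) powr (1 - \<alpha>) = (\<beta> / c) powr (1 - \<alpha>) * pr powr (1 - \<alpha>)"
    using b c pp by (simp add: powr_mult powr_divide)
  ultimately have L: "(\<beta> / c) powr (1 - \<alpha>) * pr powr (1 - \<alpha>) \<le> Kr powr (1 - \<alpha>)" by simp
  have C0: "0 \<le> X\<^sup>2 / 2 * 2 powr (-\<alpha>)" by simp
  have "X\<^sup>2 / 2 * 2 powr (-\<alpha>) * ((\<beta> / c) powr (1 - \<alpha>) * pr powr (1 - \<alpha>)) * pr powr (2 - \<alpha>)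
      \<le> X\<^sup>2 / 2 * 2 powr (-\<alpha>) * Kr powr (1 - \<alpha>) * pr powr (2 - \<alpha>)"
    using L C0 by (intro mult_right_mono mult_left_mono) auto
  moreover have "pr powr (1 - \<alpha>) * pr powr (2 - \<alpha>) = pr powr (3 - 2 * \<alpha>)"
    by (simp add: powr_add[symmetric])
  moreover have "1 \<le> pr powr (3 - 2 * \<alpha>)" using p a2 unfolding pr_def by (intro ge_one_powr_ge_zero) auto
  moreover have "0 \<le> X\<^sup>2 / 2 * 2 powr (-\<alpha>) * (\<beta> / c) powr (1 - \<alpha>)" by simp
  ultimately have "X\<^sup>2 / 2 * 2 powr (-\<alpha>) * (\<beta> / c) powr (1 - \<alpha>)
      \<le> X\<^sup>2 / 2 * 2 powr (-\<alpha>) * Kr powr (1 - \<alpha>) * pr powr (2 - \<alpha>)"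
  proof -
    assume h1: "X\<^sup>2 / 2 * 2 powr (-\<alpha>) * ((\<beta> / c) powr (1 - \<alpha>) * pr powr (1 - \<alpha>)) * pr powr (2 - \<alpha>)
      \<le> X\<^sup>2 / 2 * 2 powr (-\<alpha>) * Kr powr (1 - \<alpha>) * pr powr (2 - \<alpha>)"
      and h2: "pr powr (1 - \<alpha>) * pr powr (2 - \<alpha>) = pr powr (3 - 2 * \<alpha>)"
      and h3: "1 \<le> pr powr (3 - 2 * \<alpha>)" and h4: "0 \<le> X\<^sup>2 / 2 * 2 powr (-\<alpha>) * (\<beta> / c) powr (1 - \<alpha>)"
    have "X\<^sup>2 / 2 * 2 powr (-\<alpha>) * ((\<beta> / c) powr (1 - \<alpha>) * pr powr (1 - \<alpha>)) * pr powr (2 - \<alpha>)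
        = (X\<^sup>2 / 2 * 2 powr (-\<alpha>) * (\<beta> / c) powr (1 - \<alpha>)) * pr powr (3 - 2 * \<alpha>)"
      using h2 by (simp add: mult.assoc[symmetric])
    moreover have "(X\<^sup>2 / 2 * 2 powr (-\<alpha>) * (\<beta> / c) powr (1 - \<alpha>)) * 1
        \<le> (X\<^sup>2 / 2 * 2 powr (-\<alpha>) * (\<beta> / c) powr (1 - \<alpha>)) * pr powr (3 - 2 * \<alpha>)"
      using h3 h4 by (rule mult_left_mono)
    ultimately show ?thesis using h1 by linarith
  qed
  then show ?thesis using R unfolding Kr_def pr_def by simp
qed

lemma energy_k:
  fixes \<phi> y \<theta> c ell :: real and p k :: nat and r :: int
  assumes ph: "3/4 < \<phi>" "\<phi> < 1"
    and badly: "\<forall>p' q'::int. q' > 0 \<longrightarrow> \<bar>\<phi> - of_int p' / of_int q'\<bar> > c / (of_int q')\<^sup>2"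
    and c: "c > 0" and p: "p > 0" and per: "\<And>n. W (n + int p) = W n"
    and blk: "\<And>i. i < p \<Longrightarrow> W (s0 + int i) = (\<phi> \<le> frac (y + real i * \<phi>))"
    and th: "\<theta> = real p * \<phi> - of_int r" and k: "1 \<le> k" and th0: "\<theta> \<noteq> 0"
    and l0: "0 \<le> ell" and l1: "2 * ell \<le> real k * \<bar>\<theta>\<bar>" and l2: "real k * \<bar>\<theta>\<bar> \<le> 2 * \<phi> - 1"
    and l3: "ell \<le> 1 - \<phi>"
  shows "\<exists>A Bs. A \<subseteq> {..<p} \<and> Bs \<subseteq> {..<p} \<and> c * real p * ell - 3 \<le> real (card A) \<and>
     c * real p * ell - 3 \<le> real (card Bs) \<and>
     (\<forall>a\<in>A. \<forall>b\<in>Bs. k * p + b - a \<in> forbidden \<phi> \<and>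
         Phi_alpha \<phi> m \<alpha> (pat_of W {s0 + int a, s0 + int (k * p + b)}) = 1 / real (k * p + b - a) powr \<alpha>)"
proof -
  define t where "t = (\<lambda>i::nat. frac (y + real i * \<phi>))"
  have t01: "0 \<le> t i" "t i < 1" for i unfolding t_def by (auto simp: frac_lt_1)
  define S1 where "S1 = {i \<in> {..<p}. \<phi> < frac (y + real i * \<phi>) \<and> frac (y + real i * \<phi>) < \<phi> + ell}"
  define S2 where "S2 = {i \<in> {..<p}. 1 - ell < frac (y + real i * \<phi>) \<and> frac (y + real i * \<phi>) < (1 - ell) + ell}"
  have c1: "c * real p * ell - 3 \<le> real (card S1)" unfolding S1_def
    by (rule count_lower[OF badly c p]) (use ph l0 l3 in auto)
  have c2: "c * real p * ell - 3 \<le> real (card S2)" unfolding S2_def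
    by (rule count_lower[OF badly c p]) (use ph l0 l3 in auto)
  have sub: "S1 \<subseteq> {..<p}" "S2 \<subseteq> {..<p}" unfolding S1_def S2_def by auto
  have m1: "i \<in> S1 \<Longrightarrow> i < p \<and> \<phi> < t i \<and> t i < \<phi> + ell" for i unfolding S1_def t_def by auto
  have m2: "i \<in> S2 \<Longrightarrow> i < p \<and> 1 - ell < t i \<and> t i < 1" for i unfolding S2_def t_def by auto
  have phl: "\<phi> \<le> 1 - ell" using l3 by simp
  show ?thesis
  proof (cases "\<theta> > 0")
    case True
    have "\<forall>a\<in>S1. \<forall>b\<in>S2. k * p + b - a \<in> forbidden \<phi> \<and>
         Phi_alpha \<phi> m \<alpha> (pat_of W {s0 + int a, s0 + int (k * p + b)}) = 1 / real (k * p + b - a) powr \<alpha>"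
    proof (intro ballI)
      fix a b assume a: "a \<in> S1" and b: "b \<in> S2"
      note ma = m1[OF a] and mb = m2[OF b]
      have ab: "\<bar>\<theta>\<bar> = \<theta>" using True by simp
      show "k * p + b - a \<in> forbidden \<phi> \<and>
         Phi_alpha \<phi> m \<alpha> (pat_of W {s0 + int a, s0 + int (k * p + b)}) = 1 / real (k * p + b - a) powr \<alpha>"
      proof (rule viol[where z=0 and v="t b - t a + real k * \<theta> + of_int 0" and r=r and \<theta>=\<theta>, OF _ _ p per blk k])
        show "0 < \<phi>" "\<phi> < 1" using ph by auto
        show "a < p" "b < p" using ma mb by auto
        show "\<phi> \<le> frac (y + real a * \<phi>)" "\<phi> \<le> frac (y + real b * \<phi>)"
          using ma mb phl unfolding t_def by auto
        show "\<theta> = real p * \<phi> - of_int r" by (rule th)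
        show "t b - t a + real k * \<theta> + of_int 0 = frac (y + real b * \<phi>) - frac (y + real a * \<phi>) + real k * \<theta> + of_int 0"
          unfolding t_def ..
        show "1 - \<phi> \<le> t b - t a + real k * \<theta> + of_int 0" using ma mb l1 ab by simp
        show "t b - t a + real k * \<theta> + of_int 0 \<le> \<phi>" using ma mb l2 ab by simp
      qed
    qed
    then show ?thesis using sub c1 c2 by blast
  next
    case False
    then have neg: "\<theta> < 0" using th0 by simp
    have "\<forall>a\<in>S2. \<forall>b\<in>S1. k * p + b - a \<in> forbidden \<phi> \<and>
         Phi_alpha \<phi> m \<alpha> (pat_of W {s0 + int a, s0 + int (k * p + b)}) = 1 / real (k * p + b - a) powr \<alpha>"
    proof (intro ballI)
      fix a b assume a: "a \<in> S2" and b: "b \<in> S1"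
      note ma = m2[OF a] and mb = m1[OF b]
      have ab: "\<bar>\<theta>\<bar> = - \<theta>" using neg by simp
      show "k * p + b - a \<in> forbidden \<phi> \<and>
         Phi_alpha \<phi> m \<alpha> (pat_of W {s0 + int a, s0 + int (k * p + b)}) = 1 / real (k * p + b - a) powr \<alpha>"
      proof (rule viol[where z=1 and v="t b - t a + real k * \<theta> + of_int 1" and r=r and \<theta>=\<theta>, OF _ _ p per blk k])
        show "0 < \<phi>" "\<phi> < 1" using ph by auto
        show "a < p" "b < p" using ma mb by auto
        show "\<phi> \<le> frac (y + real a * \<phi>)" "\<phi> \<le> frac (y + real b * \<phi>)"
          using ma mb phl unfolding t_def by auto
        show "\<theta> = real p * \<phi> - of_int r" by (rule th)
        show "t b - t a + real k * \<theta> + of_int 1 = frac (y + real b * \<phi>) - frac (y + real a * \<phi>) + real k * \<theta> + of_int 1"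
          unfolding t_def ..
        show "1 - \<phi> \<le> t b - t a + real k * \<theta> + of_int 1" using ma mb l2 ab by simp
        show "t b - t a + real k * \<theta> + of_int 1 \<le> \<phi>" using ma mb l1 ab by simp
      qed
    qed
    then show ?thesis using sub c1 c2 by blast
  qed
qed

definition E1c :: "real \<Rightarrow> real \<Rightarrow> real \<Rightarrow> real" where
  "E1c \<phi> c \<alpha> = min ((c * (1 - \<phi>) / 16)\<^sup>2 / 4)
       ((c * (1 - \<phi>) / 16)\<^sup>2 / 2 * 2 powr (-\<alpha>) * ((1 - \<phi>) / c) powr (1 - \<alpha>))"

lemma theta_facts:
  fixes \<phi> c :: real and p :: nat
  assumes badly: "\<forall>p' q'::int. q' > 0 \<longrightarrow> \<bar>\<phi> - of_int p' / of_int q'\<bar> > c / (of_int q')\<^sup>2"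
    and p: "p > 0"
  shows "\<bar>real p * \<phi> - of_int \<lfloor>real p * \<phi> + 1/2\<rfloor>\<bar> \<le> 1/2"
    "c / real p < \<bar>real p * \<phi> - of_int \<lfloor>real p * \<phi> + 1/2\<rfloor>\<bar>"
proof -
  let ?r = "\<lfloor>real p * \<phi> + 1/2\<rfloor>"
  show "\<bar>real p * \<phi> - of_int ?r\<bar> \<le> 1/2"
    using floor_correct[of "real p * \<phi> + 1/2"] by linarith
  have "\<bar>\<phi> - of_int ?r / of_int (int p)\<bar> > c / (of_int (int p))\<^sup>2" using badly[rule_format, of "int p" ?r] p by simp
  then have "\<bar>\<phi> - of_int ?r / real p\<bar> > c / (real p)\<^sup>2" by simp
  then have "real p * \<bar>\<phi> - of_int ?r / real p\<bar> > real p * (c / (real p)\<^sup>2)"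
    using p by (intro mult_strict_left_mono) auto
  moreover have "real p * \<bar>\<phi> - of_int ?r / real p\<bar> = \<bar>real p * \<phi> - of_int ?r\<bar>"
    using p by (simp add: abs_mult[symmetric] field_simps)
  moreover have "real p * (c / (real p)\<^sup>2) = c / real p" using p by (simp add: power2_eq_square)
  ultimately show "c / real p < \<bar>real p * \<phi> - of_int ?r\<bar>" by linarith
qed

lemma energy_large:
  fixes \<phi> y c \<alpha> :: real and p :: nat
  assumes ph: "3/4 < \<phi>" "\<phi> < 1"
    and badly: "\<forall>p' q'::int. q' > 0 \<longrightarrow> \<bar>\<phi> - of_int p' / of_int q'\<bar> > c / (of_int q')\<^sup>2"
    and c: "c > 0" and big: "48 \<le> c * (1 - \<phi>) * real p" and a1: "1 < \<alpha>" and a2: "\<alpha> \<le> 3/2"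
    and p: "p > 0" and per: "\<And>n. W (n + int p) = W n"
    and blk: "\<And>i. i < p \<Longrightarrow> W (s0 + int i) = (\<phi> \<le> frac (y + real i * \<phi>))"
  shows "\<exists>V R. finite V \<and> 0 \<le> R \<and> (\<forall>B\<in>V. finite B \<and> B \<noteq> {} \<and> B \<subseteq> {s0..s0 + R} \<and> Min B < s0 + int p) \<and>
     E1c \<phi> c \<alpha> \<le> (\<Sum>B\<in>V. Phi_alpha \<phi> m \<alpha> (pat_of W B))"
proof -
  define r where "r = \<lfloor>real p * \<phi> + 1/2\<rfloor>"
  define \<theta> where "\<theta> = real p * \<phi> - of_int r"
  have th12: "\<bar>\<theta>\<bar> \<le> 1/2" and thc: "c / real p < \<bar>\<theta>\<bar>"
    using theta_facts[OF badly p] unfolding \<theta>_def r_def by auto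
  have "0 < c / real p" using c p by simp
  then have th0: "\<theta> \<noteq> 0" using thc by auto
  define \<beta> where "\<beta> = 1 - \<phi>"
  have b0: "0 < \<beta>" "\<beta> < 1/4" unfolding \<beta>_def using ph by auto
  define X where "X = c * \<beta> / 16"
  have X0: "0 \<le> X" unfolding X_def using c b0 by simp
  have Xp3: "3 \<le> X * real p" unfolding X_def \<beta>_def using big by simp
  have cntb: "X * real p \<le> c * real p * ell - 3" if "\<beta> / 8 \<le> ell" for ell
  proof -
    have "c * real p * (\<beta> / 8) \<le> c * real p * ell" using that c by (intro mult_left_mono) auto
    moreover have "c * real p * (\<beta> / 8) = 2 * (X * real p)" unfolding X_def by simp
    ultimately show ?thesis using Xp3 by linarith
  qed
  have prod_b: "(X * real p)\<^sup>2 \<le> real (card A * card Bs)"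
    if "X * real p \<le> real (card A)" "X * real p \<le> real (card Bs)" for A Bs :: "nat set"
  proof -
    have "(X * real p) * (X * real p) \<le> real (card A) * real (card Bs)"
      using that X0 by (intro mult_mono) auto
    then show ?thesis by (simp add: power2_eq_square)
  qed
  have pp: "0 < real p" using p by simp
  show ?thesis
  proof (cases "\<beta> / 4 \<le> \<bar>\<theta>\<bar>")
    case True
    define ell where "ell = min \<bar>\<theta>\<bar> \<beta> / 2"
    have ell: "0 \<le> ell" "2 * ell \<le> real 1 * \<bar>\<theta>\<bar>" "real 1 * \<bar>\<theta>\<bar> \<le> 2 * \<phi> - 1" "ell \<le> 1 - \<phi>" "\<beta> / 8 \<le> ell"
      unfolding ell_def using True th12 ph b0 unfolding \<beta>_def by auto
    obtain A Bs where AB: "A \<subseteq> {..<p}" "Bs \<subseteq> {..<p}" "c * real p * ell - 3 \<le> real (card A)"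
      "c * real p * ell - 3 \<le> real (card Bs)"
      "\<forall>a\<in>A. \<forall>b\<in>Bs. 1 * p + b - a \<in> forbidden \<phi> \<and>
         Phi_alpha \<phi> m \<alpha> (pat_of W {s0 + int a, s0 + int (1 * p + b)}) = 1 / real (1 * p + b - a) powr \<alpha>"
      using energy_k[OF ph badly c p per blk \<theta>_def _ th0 ell(1-4), of m \<alpha>] by auto
    have cb: "(X * real p)\<^sup>2 \<le> real (card A * card Bs)"
      using prod_b cntb[OF ell(5)] AB(3,4) by force
    obtain V R where VR: "finite V" "0 \<le> R" "\<forall>B\<in>V. finite B \<and> B \<noteq> {} \<and> B \<subseteq> {s0..s0 + R} \<and> Min B < s0 + int p"
      "(\<Sum>k\<in>{1}. real (card ((\<lambda>_. A) k) * card ((\<lambda>_. Bs) k))) / real (2 * p) powr \<alpha>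
         \<le> (\<Sum>B\<in>V. Phi_alpha \<phi> m \<alpha> (pat_of W B))"
      using pairs_energy[of "{1}" p "2 * p" "\<lambda>_. A" "\<lambda>_. Bs" \<phi> m \<alpha> W s0] AB(1,2,5) a1 by auto
    have "real (2 * p) powr \<alpha> \<le> real (2 * p) powr 2" using p a2 by (intro powr_mono) auto
    also have "\<dots> = 4 * (real p)\<^sup>2" by (simp add: power2_eq_square)
    finally have d: "real (2 * p) powr \<alpha> \<le> 4 * (real p)\<^sup>2" .
    have dpos: "0 < real (2 * p) powr \<alpha>" using p by simp
    have "X\<^sup>2 / 4 = (X * real p)\<^sup>2 / (4 * (real p)\<^sup>2)" using pp by (simp add: power2_eq_square field_simps)
    also have "\<dots> \<le> (X * real p)\<^sup>2 / real (2 * p) powr \<alpha>"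
      using d dpos by (intro divide_left_mono) auto
    also have "\<dots> \<le> real (card A * card Bs) / real (2 * p) powr \<alpha>"
      using cb dpos by (intro divide_right_mono) auto
    also have "\<dots> \<le> (\<Sum>B\<in>V. Phi_alpha \<phi> m \<alpha> (pat_of W B))" using VR(4) by simp
    finally have "X\<^sup>2 / 4 \<le> (\<Sum>B\<in>V. Phi_alpha \<phi> m \<alpha> (pat_of W B))" .
    moreover have "E1c \<phi> c \<alpha> \<le> X\<^sup>2 / 4" unfolding E1c_def X_def \<beta>_def by simp
    ultimately show ?thesis using VR(1-3) by (intro exI[of _ V] exI[of _ R]) auto
  next
    case False
    then have small: "\<bar>\<theta>\<bar> < \<beta> / 4" by simp
    have tpos: "0 < \<bar>\<theta>\<bar>" using th0 by simp
    define K where "K = nat \<lfloor>\<beta> / \<bar>\<theta>\<bar>\<rfloor>"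
    have "4 < \<beta> / \<bar>\<theta>\<bar>" using small tpos by (simp add: field_simps)
    then have K4: "4 \<le> K" unfolding K_def by linarith
    have KU: "real K \<le> \<beta> / \<bar>\<theta>\<bar>" unfolding K_def using \<open>4 < \<beta> / \<bar>\<theta>\<bar>\<close> by linarith
    have KL: "\<beta> / \<bar>\<theta>\<bar> - 1 < real K" unfolding K_def using \<open>4 < \<beta> / \<bar>\<theta>\<bar>\<close> by linarith
    have KtU: "real K * \<bar>\<theta>\<bar> \<le> \<beta>" using KU tpos by (simp add: field_simps)
    have KtL: "\<beta> - \<bar>\<theta>\<bar> < real K * \<bar>\<theta>\<bar>" using KL tpos by (simp add: field_simps)
    define Ks where "Ks = {(K + 1) div 2..K}"
    have Ksk: "1 \<le> k \<and> K \<le> 2 * k \<and> k \<le> K" if "k \<in> Ks" for k using that K4 unfolding Ks_def by auto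
    have ex: "\<forall>k\<in>Ks. \<exists>AB. fst AB \<subseteq> {..<p} \<and> snd AB \<subseteq> {..<p} \<and> X * real p \<le> real (card (fst AB)) \<and>
       X * real p \<le> real (card (snd AB)) \<and>
       (\<forall>a\<in>fst AB. \<forall>b\<in>snd AB. k * p + b - a \<in> forbidden \<phi> \<and>
         Phi_alpha \<phi> m \<alpha> (pat_of W {s0 + int a, s0 + int (k * p + b)}) = 1 / real (k * p + b - a) powr \<alpha>)"
    proof
      fix k assume kK: "k \<in> Ks"
      note kk = Ksk[OF kK]
      define ell where "ell = real k * \<bar>\<theta>\<bar> / 2"
      have "real k * \<bar>\<theta>\<bar> \<le> real K * \<bar>\<theta>\<bar>" using kk tpos by (intro mult_right_mono) auto
      then have kt: "real k * \<bar>\<theta>\<bar> \<le> \<beta>" using KtU by linarith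
      have "real K * \<bar>\<theta>\<bar> \<le> 2 * (real k * \<bar>\<theta>\<bar>)"
        using kk tpos by (simp add: mult.assoc[symmetric] mult_right_mono)
      then have ell8: "\<beta> / 8 \<le> ell" unfolding ell_def using KtL small by linarith
      have ell: "0 \<le> ell" "2 * ell \<le> real k * \<bar>\<theta>\<bar>" "real k * \<bar>\<theta>\<bar> \<le> 2 * \<phi> - 1" "ell \<le> 1 - \<phi>"
        unfolding ell_def using kt b0 tpos ph unfolding \<beta>_def by auto
      obtain A Bs where AB: "A \<subseteq> {..<p}" "Bs \<subseteq> {..<p}" "c * real p * ell - 3 \<le> real (card A)"
        "c * real p * ell - 3 \<le> real (card Bs)"
        "\<forall>a\<in>A. \<forall>b\<in>Bs. k * p + b - a \<in> forbidden \<phi> \<and>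
           Phi_alpha \<phi> m \<alpha> (pat_of W {s0 + int a, s0 + int (k * p + b)}) = 1 / real (k * p + b - a) powr \<alpha>"
        using energy_k[OF ph badly c p per blk \<theta>_def _ th0 ell, of m \<alpha>] kk by auto
      show "\<exists>AB. fst AB \<subseteq> {..<p} \<and> snd AB \<subseteq> {..<p} \<and> X * real p \<le> real (card (fst AB)) \<and>
       X * real p \<le> real (card (snd AB)) \<and>
       (\<forall>a\<in>fst AB. \<forall>b\<in>snd AB. k * p + b - a \<in> forbidden \<phi> \<and>
         Phi_alpha \<phi> m \<alpha> (pat_of W {s0 + int a, s0 + int (k * p + b)}) = 1 / real (k * p + b - a) powr \<alpha>)"
        using AB cntb[OF ell8] by (intro exI[of _ "(A, Bs)"]) auto
    qed
    then obtain f where f: "\<forall>k\<in>Ks. fst (f k) \<subseteq> {..<p} \<and> snd (f k) \<subseteq> {..<p} \<and> X * real p \<le> real (card (fst (f k))) \<and>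
       X * real p \<le> real (card (snd (f k))) \<and>
       (\<forall>a\<in>fst (f k). \<forall>b\<in>snd (f k). k * p + b - a \<in> forbidden \<phi> \<and>
         Phi_alpha \<phi> m \<alpha> (pat_of W {s0 + int a, s0 + int (k * p + b)}) = 1 / real (k * p + b - a) powr \<alpha>)"
      using bchoice[OF ex] by (elim exE) blast
    define N where "N = 2 * K * p"
    have KN: "1 \<le> k \<and> (k + 1) * p \<le> N" if "k \<in> Ks" for k
    proof -
      have "k + 1 \<le> 2 * K" using Ksk[OF that] K4 by linarith
      then have "(k + 1) * p \<le> 2 * K * p" by (intro mult_right_mono) auto
      then show ?thesis using Ksk[OF that] unfolding N_def by simp
    qed
    obtain V R where VR: "finite V" "0 \<le> R" "\<forall>B\<in>V. finite B \<and> B \<noteq> {} \<and> B \<subseteq> {s0..s0 + R} \<and> Min B < s0 + int p"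
      "(\<Sum>k\<in>Ks. real (card (fst (f k)) * card (snd (f k)))) / real N powr \<alpha>
         \<le> (\<Sum>B\<in>V. Phi_alpha \<phi> m \<alpha> (pat_of W B))"
      using pairs_energy[of Ks p N "\<lambda>k. fst (f k)" "\<lambda>k. snd (f k)" \<phi> m \<alpha> W s0] KN f a1
      unfolding Ks_def by auto
    have sumb: "real (card Ks) * (X * real p)\<^sup>2 \<le> (\<Sum>k\<in>Ks. real (card (fst (f k)) * card (snd (f k))))"
    proof -
      have "(\<Sum>k\<in>Ks. (X * real p)\<^sup>2) \<le> (\<Sum>k\<in>Ks. real (card (fst (f k)) * card (snd (f k))))"
        using f prod_b by (intro sum_mono) blast
      then show ?thesis by simp
    qed
    have cK: "real K / 2 \<le> real (card Ks)"
    proof -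
      have "card Ks = K + 1 - (K + 1) div 2" unfolding Ks_def by simp
      moreover have "2 * ((K + 1) div 2) \<le> K + 1" by simp
      ultimately show ?thesis by linarith
    qed
    have Npos: "0 < real N powr \<alpha>" using K4 p unfolding N_def by simp
    have "real K / 2 * (X * real p)\<^sup>2 / real N powr \<alpha> \<le> real (card Ks) * (X * real p)\<^sup>2 / real N powr \<alpha>"
      using cK Npos by (intro divide_right_mono mult_right_mono) auto
    also have "\<dots> \<le> (\<Sum>k\<in>Ks. real (card (fst (f k)) * card (snd (f k)))) / real N powr \<alpha>"
      using sumb Npos by (intro divide_right_mono) auto
    also have "\<dots> \<le> (\<Sum>B\<in>V. Phi_alpha \<phi> m \<alpha> (pat_of W B))" by (rule VR(4))
    finally have e: "real K / 2 * (X * real p)\<^sup>2 / real N powr \<alpha> \<le> (\<Sum>B\<in>V. Phi_alpha \<phi> m \<alpha> (pat_of W B))" .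
    have Kb: "real K \<le> \<beta> * real p / c"
    proof -
      have cp: "0 < c / real p" using c pp by simp
      have pos: "0 < \<bar>\<theta>\<bar> * (c / real p)" by (rule mult_pos_pos[OF tpos cp])
      have "\<beta> / \<bar>\<theta>\<bar> \<le> \<beta> / (c / real p)"
        by (rule divide_left_mono[OF _ _ pos]) (use thc b0 in linarith)+
      then show ?thesis using KU by (simp add: field_simps)
    qed
    have n2: "X\<^sup>2 / 2 * 2 powr (-\<alpha>) * (\<beta> / c) powr (1 - \<alpha>) \<le> (real K / 2) * (X * real p)\<^sup>2 / (2 * real K * real p) powr \<alpha>"
      by (rule numeric2) (use K4 p c b0 Kb a1 a2 X0 in auto)
    have rN: "real N = 2 * real K * real p" unfolding N_def by simp
    have e': "(real K / 2) * (X * real p)\<^sup>2 / (2 * real K * real p) powr \<alpha> \<le> (\<Sum>B\<in>V. Phi_alpha \<phi> m \<alpha> (pat_of W B))"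
      using e unfolding rN .
    have E1: "E1c \<phi> c \<alpha> \<le> X\<^sup>2 / 2 * 2 powr (-\<alpha>) * (\<beta> / c) powr (1 - \<alpha>)"
      unfolding E1c_def X_def \<beta>_def by simp
    have "E1c \<phi> c \<alpha> \<le> (\<Sum>B\<in>V. Phi_alpha \<phi> m \<alpha> (pat_of W B))"
      using order_trans[OF E1 order_trans[OF n2 e']] .
    then show ?thesis using VR(1-3) by (intro exI[of _ V] exI[of _ R]) auto
  qed
qed

definition E3c :: "real \<Rightarrow> real \<Rightarrow> real \<Rightarrow> nat \<Rightarrow> real" where
  "E3c \<phi> c \<alpha> P0 = min 1 (1 / (((1 - \<phi>) * real P0 / c + 1) * real P0) powr \<alpha>)"

lemma zeros_pat_of:
  assumes m: "1 \<le> m" and z: "\<And>i. 0 \<le> i \<Longrightarrow> i < int m \<Longrightarrow> \<not> W (s0 + i)"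
  shows "pat_of W {s0..s0 + int m - 1} = zeros_pat m"
proof
  fix i
  have mn: "Min {s0..s0 + int m - 1} = s0" using m by (intro Min_eqI) auto
  show "pat_of W {s0..s0 + int m - 1} i = zeros_pat m i"
    unfolding pat_of_def zeros_pat_def mn using z[of i] by (auto simp: add.commute)
qed

lemma energy_small:
  fixes \<phi> y c \<alpha> :: real and p P0 :: nat
  assumes ph: "3/4 < \<phi>" "\<phi> < 1"
    and badly: "\<forall>p' q'::int. q' > 0 \<longrightarrow> \<bar>\<phi> - of_int p' / of_int q'\<bar> > c / (of_int q')\<^sup>2"
    and c: "c > 0" and pP: "p < P0" and a1: "1 < \<alpha>" and m: "1 \<le> m"
    and p: "p > 0" and per: "\<And>n. W (n + int p) = W n"
    and blk: "\<And>i. i < p \<Longrightarrow> W (s0 + int i) = (\<phi> \<le> frac (y + real i * \<phi>))"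
  shows "\<exists>V R. finite V \<and> 0 \<le> R \<and> (\<forall>B\<in>V. finite B \<and> B \<noteq> {} \<and> B \<subseteq> {s0..s0 + R} \<and> Min B < s0 + int p) \<and>
     E3c \<phi> c \<alpha> P0 \<le> (\<Sum>B\<in>V. Phi_alpha \<phi> m \<alpha> (pat_of W B))"
proof (cases "\<exists>a<p. \<phi> \<le> frac (y + real a * \<phi>)")
  case True
  then obtain a where a: "a < p" "\<phi> \<le> frac (y + real a * \<phi>)" by blast
  define r where "r = \<lfloor>real p * \<phi> + 1/2\<rfloor>"
  define \<theta> where "\<theta> = real p * \<phi> - of_int r"
  have th12: "\<bar>\<theta>\<bar> \<le> 1/2" and thc: "c / real p < \<bar>\<theta>\<bar>"
    using theta_facts[OF badly p] unfolding \<theta>_def r_def by auto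
  have cp: "0 < c / real p" using c p by simp
  then have tpos: "0 < \<bar>\<theta>\<bar>" using thc by linarith
  define \<beta> where "\<beta> = 1 - \<phi>"
  have b0: "0 < \<beta>" "\<beta> < 1/4" unfolding \<beta>_def using ph by auto
  define k where "k = nat \<lceil>\<beta> / \<bar>\<theta>\<bar>\<rceil>"
  have bt: "0 < \<beta> / \<bar>\<theta>\<bar>" using b0 tpos by simp
  have kL: "\<beta> / \<bar>\<theta>\<bar> \<le> real k" unfolding k_def using bt by linarith
  have kU: "real k < \<beta> / \<bar>\<theta>\<bar> + 1" unfolding k_def using bt by linarith
  have k1: "1 \<le> k" unfolding k_def using bt by linarith
  have ktL: "\<beta> \<le> real k * \<bar>\<theta>\<bar>" using kL tpos by (simp add: field_simps)
  have ktU: "real k * \<bar>\<theta>\<bar> < \<beta> + \<bar>\<theta>\<bar>" using kU tpos by (simp add: field_simps)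
  define z :: int where "z = (if \<theta> > 0 then 0 else 1)"
  define v where "v = frac (y + real a * \<phi>) - frac (y + real a * \<phi>) + real k * \<theta> + of_int z"
  have vv: "1 - \<phi> \<le> v \<and> v \<le> \<phi>"
  proof (cases "\<theta> > 0")
    case True
    then have "v = real k * \<bar>\<theta>\<bar>" unfolding v_def z_def by simp
    then show ?thesis using ktL ktU th12 b0 unfolding \<beta>_def by auto
  next
    case False
    then have "v = 1 - real k * \<bar>\<theta>\<bar>" unfolding v_def z_def by simp
    then show ?thesis using ktL ktU th12 b0 unfolding \<beta>_def by auto
  qed
  have vi: "k * p + a - a \<in> forbidden \<phi> \<and>
         Phi_alpha \<phi> m \<alpha> (pat_of W {s0 + int a, s0 + int (k * p + a)}) = 1 / real (k * p + a - a) powr \<alpha>"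
    by (rule viol[OF _ _ p per blk k1 a(1) a(1) a(2) a(2) \<theta>_def v_def]) (use ph vv in auto)
  define B where "B = {s0 + int a, s0 + int (k * p + a)}"
  have kp: "p \<le> k * p" using k1 by simp
  have Bp: "finite B \<and> B \<noteq> {} \<and> B \<subseteq> {s0..s0 + int (k * p + a)} \<and> Min B < s0 + int p"
    unfolding B_def using a(1) kp by auto
  have "real k * real p \<le> ((1 - \<phi>) * real P0 / c + 1) * real P0"
  proof -
    have "\<beta> / \<bar>\<theta>\<bar> \<le> \<beta> / (c / real p)"
    proof -
      have pos: "0 < \<bar>\<theta>\<bar> * (c / real p)" by (rule mult_pos_pos[OF tpos cp])
      show ?thesis by (rule divide_left_mono[OF _ _ pos]) (use thc b0 in linarith)+
    qed
    moreover have "\<beta> / (c / real p) = \<beta> * real p / c" by simp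
    ultimately have "real k \<le> \<beta> * real p / c + 1" using kU by linarith
    also have "\<dots> \<le> \<beta> * real P0 / c + 1" using pP b0 c by (simp add: field_simps mult_left_mono)
    finally have "real k \<le> \<beta> * real P0 / c + 1" .
    moreover have "real p \<le> real P0" using pP by simp
    ultimately show ?thesis unfolding \<beta>_def using b0 c by (intro mult_mono) (auto simp: \<beta>_def)
  qed
  moreover have "0 < real k * real p" using k1 p by simp
  ultimately have "(real k * real p) powr \<alpha> \<le> (((1 - \<phi>) * real P0 / c + 1) * real P0) powr \<alpha>"
    using a1 by (intro powr_mono2) auto
  moreover have "0 < (real k * real p) powr \<alpha>" using k1 p by simp
  ultimately have "1 / (((1 - \<phi>) * real P0 / c + 1) * real P0) powr \<alpha> \<le> 1 / (real k * real p) powr \<alpha>"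
    by (rule inv_le_real[rotated])
  moreover have "real (k * p + a - a) = real k * real p" by simp
  ultimately have "E3c \<phi> c \<alpha> P0 \<le> Phi_alpha \<phi> m \<alpha> (pat_of W B)"
    unfolding E3c_def B_def using vi by simp
  then show ?thesis using Bp by (intro exI[of _ "{B}"] exI[of _ "int (k * p + a)"]) auto
next
  case False
  have Wf: "\<not> W n" for n
  proof -
    define i where "i = (n - s0) mod int p"
    have i: "0 \<le> i" "i < int p" unfolding i_def using p by auto
    have "n = (s0 + int (nat i)) + ((n - s0) div int p) * int p"
      unfolding i_def using i by (simp add: mult.commute)
    then have "W n = W (s0 + int (nat i))" using per_int[where W=W and p=p, OF per] by metis
    also have "\<dots> = (\<phi> \<le> frac (y + real (nat i) * \<phi>))" by (rule blk) (use i in linarith)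
    finally show ?thesis using False i by (metis nat_less_iff)
  qed
  define B where "B = {s0..s0 + int m - 1}"
  have pz: "pat_of W B = zeros_pat m" unfolding B_def by (rule zeros_pat_of[OF m]) (simp add: Wf)
  have "Phi_alpha \<phi> m \<alpha> (zeros_pat m) = 1" unfolding Phi_alpha_def by simp
  then have e: "E3c \<phi> c \<alpha> P0 \<le> Phi_alpha \<phi> m \<alpha> (pat_of W B)" unfolding pz E3c_def by simp
  have "finite B \<and> B \<noteq> {} \<and> B \<subseteq> {s0..s0 + (int m - 1)} \<and> Min B < s0 + int p"
    unfolding B_def using m p Min_eqI[of "{s0..s0 + int m - 1}" s0] by auto
  then show ?thesis using e m by (intro exI[of _ "{B}"] exI[of _ "int m - 1"]) auto
qed

lemma inv_lim: "(\<lambda>k::nat. C / (2 * real k + 1)) \<longlonglongrightarrow> 0"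
proof (rule tendsto_divide_0[OF tendsto_const])
  have "filterlim (\<lambda>k::nat. 2 * real k + 1) at_top sequentially"
    by (rule filterlim_at_top_mono[OF filterlim_real_sequentially]) auto
  then show "filterlim (\<lambda>k::nat. 2 * real k + 1) at_infinity sequentially"
    by (rule filterlim_at_top_imp_at_infinity)
qed

lemma liminf_upper:
  assumes "\<And>k. f k \<le> A + C / (2 * real k + 1)"
  shows "liminf (\<lambda>k. ereal (f k)) \<le> ereal A"
proof -
  have "liminf (\<lambda>k. ereal (f k)) \<le> liminf (\<lambda>k. ereal (A + C / (2 * real k + 1)))"
    using assms by (intro Liminf_mono) auto
  also have "\<dots> = ereal A"
  proof (rule lim_imp_Liminf)
    show "((\<lambda>k. ereal (A + C / (2 * real k + 1))) \<longlongrightarrow> ereal A) sequentially"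
      using tendsto_add[OF tendsto_const[of A] inv_lim[of C]] by (simp add: tendsto_ereal)
  qed simp
  finally show ?thesis .
qed

lemma liminf_lower:
  assumes "\<And>k. A - C / (2 * real k + 1) \<le> f k"
  shows "ereal A \<le> liminf (\<lambda>k. ereal (f k))"
proof -
  have "ereal A = liminf (\<lambda>k. ereal (A - C / (2 * real k + 1)))"
  proof (rule lim_imp_Liminf[symmetric])
    show "((\<lambda>k. ereal (A - C / (2 * real k + 1))) \<longlongrightarrow> ereal A) sequentially"
      using tendsto_diff[OF tendsto_const[of A] inv_lim[of C]] by (simp add: tendsto_ereal)
  qed simp
  also have "\<dots> \<le> liminf (\<lambda>k. ereal (f k))"
    using assms by (intro Liminf_mono) auto
  finally show ?thesis .
qed

lemma sum_dev:
  fixes d a b e :: "'q \<Rightarrow> real"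
  assumes "finite P" "\<And>q. q \<in> P \<Longrightarrow> \<bar>a q - b q\<bar> \<le> e q"
  shows "\<bar>(\<Sum>q\<in>P. d q * a q) - (\<Sum>q\<in>P. d q * b q)\<bar> \<le> (\<Sum>q\<in>P. \<bar>d q\<bar> * e q)"
proof -
  have "(\<Sum>q\<in>P. d q * a q) - (\<Sum>q\<in>P. d q * b q) = (\<Sum>q\<in>P. d q * (a q - b q))"
    by (simp add: sum_subtractf right_diff_distrib)
  also have "\<bar>\<dots>\<bar> \<le> (\<Sum>q\<in>P. \<bar>d q * (a q - b q)\<bar>)" by (rule sum_abs)
  also have "\<dots> \<le> (\<Sum>q\<in>P. \<bar>d q\<bar> * e q)"
    using assms(2) by (intro sum_mono) (simp add: abs_mult mult_left_mono)
  finally show ?thesis .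
qed

lemma brK_nonneg: "finite (dom q) \<Longrightarrow> 0 \<le> brK \<phi> q"
  using br_prop[where q=q and L=0 and \<phi>=\<phi> and t=0] by simp

theorem theorem4p5:
  fixes \<phi> \<alpha> :: real and m :: nat and X :: config
  assumes "3/4 < \<phi>" and "\<phi> < 1" and "badly_approximable \<phi>"
    and "1 < \<alpha>" and "\<alpha> \<le> 3/2"
    and "good_m \<phi> m"
    and "sturmian \<phi> X"
  shows "\<forall>P. finite P \<and> P \<subseteq> patterns \<longrightarrow>
           (\<exists>lam>0. \<forall>\<Phi>'. perturbation lam P (Phi_alpha \<phi> m \<alpha>) \<Phi>' \<longrightarrow>
              (\<forall>W \<in> PS \<phi>. density \<Phi>' X \<le> density \<Phi>' W))"
proof (intro allI impI)
  fix P :: "pattern set" assume PP: "finite P \<and> P \<subseteq> patterns"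
  have finP: "finite P" and Ppat: "P \<subseteq> patterns" using PP by auto
  note ph = assms(1,2)
  have ph01: "0 < \<phi>" "\<phi> < 1" using ph by auto
  obtain c where c: "c > 0" and badly: "\<forall>p' q'::int. q' > 0 \<longrightarrow> \<bar>\<phi> - of_int p' / of_int q'\<bar> > c / (of_int q')\<^sup>2"
    using assms(3) unfolding badly_approximable_def by blast
  have m1: "1 \<le> m"
  proof (rule ccontr)
    assume "\<not> 1 \<le> m"
    then have m0: "m = 0" by simp
    have "\<forall>X. ((\<forall>n::int. \<not> (\<forall>i::nat. i < m \<longrightarrow> \<not> X (n + int i))) \<and>
      (\<forall>a b::int. a < b \<and> X a \<and> X b \<longrightarrow> nat (b - a) \<notin> forbidden \<phi>)) \<longleftrightarrow> sturmian \<phi> X"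
      using assms(6) unfolding good_m_def .
    then have "((\<forall>n::int. \<not> (\<forall>i::nat. i < m \<longrightarrow> \<not> X (n + int i))) \<and>
      (\<forall>a b::int. a < b \<and> X a \<and> X b \<longrightarrow> nat (b - a) \<notin> forbidden \<phi>)) \<longleftrightarrow> sturmian \<phi> X"
      by (rule spec)
    then have "\<forall>n::int. \<not> (\<forall>i::nat. i < m \<longrightarrow> \<not> X (n + int i))" using assms(7) by blast
    then show False using m0 by simp
  qed
  define \<beta> where "\<beta> = 1 - \<phi>"
  have b0: "0 < \<beta>" unfolding \<beta>_def using ph by simp
  define P0 where "P0 = nat \<lceil>48 / (c * \<beta>)\<rceil>"
  define E0 where "E0 = min (E1c \<phi> c \<alpha>) (E3c \<phi> c \<alpha> P0)"
  have E0pos: "0 < E0"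
  proof -
    have "0 < E1c \<phi> c \<alpha>" unfolding E1c_def using c b0 unfolding \<beta>_def by simp
    moreover have "0 < E3c \<phi> c \<alpha> P0"
    proof -
      have "0 < 48 / (c * \<beta>)" using c b0 by simp
      then have P0p: "0 < real P0" unfolding P0_def by simp
      have h: "0 \<le> (1 - \<phi>) * real P0 / c" using c ph by simp
      have "0 < (1 - \<phi>) * real P0 / c + 1" using h by linarith
      then have X: "0 < ((1 - \<phi>) * real P0 / c + 1) * real P0" using P0p by simp
      have "0 < (((1 - \<phi>) * real P0 / c + 1) * real P0) powr \<alpha>" by (simp only: powr_gt_zero) (use X in linarith)
      then have "0 < 1 / (((1 - \<phi>) * real P0 / c + 1) * real P0) powr \<alpha>" by simp
      then show ?thesis unfolding E3c_def by simp
    qed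
    ultimately show ?thesis unfolding E0_def by simp
  qed
  define Kq where "Kq = (\<lambda>q::pattern. brK \<phi> q + of_int (Max (dom q)) + of_int (Max (dom q)) * \<bar>brF \<phi> q\<bar>)"
  have Kq0: "0 \<le> Kq q" if "q \<in> P" for q
  proof -
    have "q \<in> patterns" using that Ppat by auto
    note pf = pattern_facts[OF this]
    show ?thesis unfolding Kq_def using brK_nonneg[OF pf(1), of \<phi>] pf(4) by simp
  qed
  define Ksum where "Ksum = (\<Sum>q\<in>P. Kq q)"
  have Ks0: "0 \<le> Ksum" unfolding Ksum_def using Kq0 by (simp add: sum_nonneg)
  define lam where "lam = E0 / (Ksum + 1)"
  have lam0: "0 < lam" unfolding lam_def using E0pos Ks0 by simp
  have lamK: "lam * Ksum \<le> E0"
  proof -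
    have "lam * Ksum = E0 * (Ksum / (Ksum + 1))" unfolding lam_def by simp
    also have "\<dots> \<le> E0 * 1" using E0pos Ks0 by (intro mult_left_mono) auto
    finally show ?thesis by simp
  qed
  show "\<exists>lam>0. \<forall>\<Phi>'. perturbation lam P (Phi_alpha \<phi> m \<alpha>) \<Phi>' \<longrightarrow>
              (\<forall>W \<in> PS \<phi>. density \<Phi>' X \<le> density \<Phi>' W)"
  proof (intro exI[of _ lam] conjI allI impI ballI)
    show "0 < lam" by (rule lam0)
    fix \<Phi>' W assume pert: "perturbation lam P (Phi_alpha \<phi> m \<alpha>) \<Phi>'" and WPS: "W \<in> PS \<phi>"
    define \<Phi> where "\<Phi> = Phi_alpha \<phi> m \<alpha>"
    define \<delta> where "\<delta> = (\<lambda>q. \<Phi>' q - \<Phi> q)"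
    have dl: "\<bar>\<delta> q\<bar> \<le> lam" if "q \<in> P" for q
      using pert that unfolding perturbation_def \<delta>_def \<Phi>_def by (simp add: abs_minus_commute less_imp_le)
    define A where "A = (\<Sum>q\<in>P. \<delta> q * brF \<phi> q)"
    define C1 where "C1 = (\<Sum>q\<in>P. \<bar>\<delta> q\<bar> * (brK \<phi> q + of_int (Max (dom q)) * \<bar>brF \<phi> q\<bar>))"
    have hX: "ham \<Phi>' X (- int k) (int k) / (2 * real k + 1) \<le> A + C1 / (2 * real k + 1)" for k
    proof -
      have e: "ham \<Phi>' X (- int k) (int k) = (\<Sum>q\<in>P. \<delta> q * real (cnt X q (- int k) (int k)))"
        using ham_split[OF finP Ppat pert, of X "- int k" "int k"] ham_X_zero[OF assms(6,7)]
        unfolding \<delta>_def \<Phi>_def by simp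
      have "\<bar>(\<Sum>q\<in>P. \<delta> q * real (cnt X q (- int k) (int k))) - (\<Sum>q\<in>P. \<delta> q * ((2 * real k + 1) * brF \<phi> q))\<bar> \<le> C1"
        unfolding C1_def using X_cnt_bound[OF assms(7) ph01] Ppat by (intro sum_dev[OF finP]) auto
      moreover have "(\<Sum>q\<in>P. \<delta> q * ((2 * real k + 1) * brF \<phi> q)) = (2 * real k + 1) * A"
        unfolding A_def by (simp add: sum_distrib_left algebra_simps)
      ultimately have "ham \<Phi>' X (- int k) (int k) \<le> (2 * real k + 1) * A + C1" using e by linarith
      then have "ham \<Phi>' X (- int k) (int k) / (2 * real k + 1) \<le> ((2 * real k + 1) * A + C1) / (2 * real k + 1)"
        by (rule divide_right_mono) simp
      also have "((2 * real k + 1) * A + C1) / (2 * real k + 1) = A + C1 / (2 * real k + 1)"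
        by (simp add: field_simps)
      finally show ?thesis .
    qed
    obtain p s Z j where p: "p > 0" and per: "\<And>n. W (n + int p) = W n" and stZ: "sturmian \<phi> Z"
      and blkZ: "\<And>i. i < p \<Longrightarrow> W (s + int i) = Z (j + int i)"
      using WPS unfolding PS_def by blast
    obtain x' where x': "\<forall>n\<in>{j..j + int p}. Z n = (\<phi> \<le> frac (x' + of_int n * \<phi>))"
      using sturm_window[OF stZ ph01, of "{j..j + int p}"] by auto
    define y where "y = x' + of_int j * \<phi>"
    have blk: "W (s + int i) = (\<phi> \<le> frac (y + real i * \<phi>))" if "i < p" for i
    proof -
      have "W (s + int i) = Z (j + int i)" by (rule blkZ[OF that])
      also have "\<dots> = (\<phi> \<le> frac (x' + of_int (j + int i) * \<phi>))" using x' that by auto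
      also have "x' + of_int (j + int i) * \<phi> = y + real i * \<phi>" unfolding y_def by (simp add: algebra_simps)
      finally show ?thesis .
    qed
    obtain V R where VR: "finite V" "0 \<le> R" "\<forall>B\<in>V. finite B \<and> B \<noteq> {} \<and> B \<subseteq> {s..s + R} \<and> Min B < s + int p"
      and EV: "E0 \<le> (\<Sum>B\<in>V. \<Phi> (pat_of W B))"
    proof (cases "P0 \<le> p")
      case True
      have "48 / (c * \<beta>) \<le> real P0" unfolding P0_def by linarith
      also have "\<dots> \<le> real p" using True by simp
      finally have "48 \<le> c * \<beta> * real p" using c b0 by (simp add: field_simps)
      then have big: "48 \<le> c * (1 - \<phi>) * real p" unfolding \<beta>_def .
      obtain V R where "finite V" "0 \<le> R" "\<forall>B\<in>V. finite B \<and> B \<noteq> {} \<and> B \<subseteq> {s..s + R} \<and> Min B < s + int p"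
        "E1c \<phi> c \<alpha> \<le> (\<Sum>B\<in>V. Phi_alpha \<phi> m \<alpha> (pat_of W B))"
        using energy_large[OF ph badly c big assms(4,5) p per blk, of m] by blast
      then show ?thesis using that unfolding E0_def \<Phi>_def by (meson min.coboundedI1 order_trans)
    next
      case False
      then have pP: "p < P0" by simp
      obtain V R where "finite V" "0 \<le> R" "\<forall>B\<in>V. finite B \<and> B \<noteq> {} \<and> B \<subseteq> {s..s + R} \<and> Min B < s + int p"
        "E3c \<phi> c \<alpha> P0 \<le> (\<Sum>B\<in>V. Phi_alpha \<phi> m \<alpha> (pat_of W B))"
        using energy_small[OF ph badly c pP assms(4) m1 p per blk] by blast
      then show ?thesis using that unfolding E0_def \<Phi>_def by (meson min.coboundedI2 order_trans)
    qed
    define E where "E = (\<Sum>B\<in>V. \<Phi> (pat_of W B))"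
    have hamW: "((2 * real k - of_int R) / real p - 1) * E \<le> ham \<Phi> W (- int k) (int k)" for k
      unfolding E_def
      by (rule window_energy[where \<Phi>=\<Phi> and W=W and p=p and V=V, OF _ p per VR(1)])
         (use VR(3) Phi_nonneg in \<open>auto simp: \<Phi>_def\<close>)
    define Kb where "Kb = (\<lambda>q::pattern. real p + of_int (Max (dom q)))"
    define C2 where "C2 = (\<Sum>q\<in>P. \<bar>\<delta> q\<bar> * Kb q)"
    define C3 where "C3 = C2 + (of_int R + 1 + real p) * E / real p"
    have E0E: "E0 \<le> E" unfolding E_def by (rule EV)
    have hW: "A - C3 / (2 * real k + 1) \<le> ham \<Phi>' W (- int k) (int k) / (2 * real k + 1)" for k
    proof -
      define T where "T = 2 * real k + 1"
      have Tp: "0 < T" unfolding T_def by simp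
      have e: "ham \<Phi>' W (- int k) (int k) = ham \<Phi> W (- int k) (int k) + (\<Sum>q\<in>P. \<delta> q * real (cnt W q (- int k) (int k)))"
        using ham_split[OF finP Ppat pert, of W "- int k" "int k"] unfolding \<delta>_def \<Phi>_def by simp
      have cb: "\<bar>real (cnt W q (- int k) (int k)) - T * brF \<phi> q\<bar> \<le> Kb q + T / real p * Kq q" if q: "q \<in> P" for q
      proof -
        have qp: "q \<in> patterns" using q Ppat by auto
        have b1: "\<bar>real (cnt W q (- int k) (int k)) - T / real p * (\<Sum>n<p. of_bool (match W q (s + int n)))\<bar> \<le> Kb q"
          unfolding T_def Kb_def by (rule W_cnt_bound1[where W=W and p=p and q=q and k=k, OF p per qp])
        have b2: "\<bar>(\<Sum>n<p. of_bool (match W q (s + int n))) - real p * brF \<phi> q\<bar> \<le> Kq q"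
          unfolding Kq_def by (rule W_cnt_bound2[where W=W and p=p and q=q and Z=Z and \<phi>=\<phi>, OF p per qp stZ ph01 blkZ])
        have "\<bar>T / real p * (\<Sum>n<p. of_bool (match W q (s + int n))) - T * brF \<phi> q\<bar>
            = T / real p * \<bar>(\<Sum>n<p. of_bool (match W q (s + int n))) - real p * brF \<phi> q\<bar>"
        proof -
          have "T / real p * (\<Sum>n<p. of_bool (match W q (s + int n))) - T * brF \<phi> q
              = T / real p * ((\<Sum>n<p. of_bool (match W q (s + int n))) - real p * brF \<phi> q)"
            using p by (simp add: field_simps)
          moreover have "0 \<le> T / real p" using Tp by simp
          ultimately show ?thesis by (metis abs_mult abs_of_nonneg)
        qed
        also have "\<dots> \<le> T / real p * Kq q" using b2 Tp by (intro mult_left_mono) auto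
        finally have b3: "\<bar>T / real p * (\<Sum>n<p. of_bool (match W q (s + int n))) - T * brF \<phi> q\<bar> \<le> T / real p * Kq q" .
        show ?thesis using abs_tri[OF b1 b3] .
      qed
      have "\<bar>(\<Sum>q\<in>P. \<delta> q * real (cnt W q (- int k) (int k))) - (\<Sum>q\<in>P. \<delta> q * (T * brF \<phi> q))\<bar>
          \<le> (\<Sum>q\<in>P. \<bar>\<delta> q\<bar> * (Kb q + T / real p * Kq q))"
        using cb by (intro sum_dev[OF finP]) auto
      moreover have "(\<Sum>q\<in>P. \<bar>\<delta> q\<bar> * (Kb q + T / real p * Kq q)) = C2 + T / real p * (\<Sum>q\<in>P. \<bar>\<delta> q\<bar> * Kq q)"
        unfolding C2_def by (simp add: sum.distrib sum_distrib_left algebra_simps)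
      moreover have "(\<Sum>q\<in>P. \<delta> q * (T * brF \<phi> q)) = T * A"
        unfolding A_def by (simp add: sum_distrib_left algebra_simps)
      moreover have "(\<Sum>q\<in>P. \<bar>\<delta> q\<bar> * Kq q) \<le> lam * Ksum"
      proof -
        have "(\<Sum>q\<in>P. \<bar>\<delta> q\<bar> * Kq q) \<le> (\<Sum>q\<in>P. lam * Kq q)"
          using dl Kq0 by (intro sum_mono mult_right_mono) auto
        then show ?thesis unfolding Ksum_def by (simp add: sum_distrib_left)
      qed
      ultimately have s1: "T * A - C2 - T / real p * (lam * Ksum) \<le> (\<Sum>q\<in>P. \<delta> q * real (cnt W q (- int k) (int k)))"
      proof -
        assume h1: "\<bar>(\<Sum>q\<in>P. \<delta> q * real (cnt W q (- int k) (int k))) - (\<Sum>q\<in>P. \<delta> q * (T * brF \<phi> q))\<bar>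
          \<le> (\<Sum>q\<in>P. \<bar>\<delta> q\<bar> * (Kb q + T / real p * Kq q))"
          and h2: "(\<Sum>q\<in>P. \<bar>\<delta> q\<bar> * (Kb q + T / real p * Kq q)) = C2 + T / real p * (\<Sum>q\<in>P. \<bar>\<delta> q\<bar> * Kq q)"
          and h3: "(\<Sum>q\<in>P. \<delta> q * (T * brF \<phi> q)) = T * A"
          and h4: "(\<Sum>q\<in>P. \<bar>\<delta> q\<bar> * Kq q) \<le> lam * Ksum"
        have "T / real p * (\<Sum>q\<in>P. \<bar>\<delta> q\<bar> * Kq q) \<le> T / real p * (lam * Ksum)"
          using h4 Tp by (intro mult_left_mono) auto
        then show ?thesis using h1 h2 h3 by linarith
      qed
      have s2: "T / real p * (lam * Ksum) \<le> T / real p * E"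
        using lamK E0E Tp by (intro mult_left_mono) auto
      have hw: "((2 * real k - of_int R) / real p - 1) * E = T / real p * E - (of_int R + 1 + real p) * E / real p"
        unfolding T_def using p by (simp add: field_simps)
      have "T * A - C3 \<le> ham \<Phi>' W (- int k) (int k)"
        using e s1 s2 hamW[of k] hw unfolding C3_def by linarith
      then have "(T * A - C3) / T \<le> ham \<Phi>' W (- int k) (int k) / T"
        using Tp by (intro divide_right_mono) auto
      moreover have "(T * A - C3) / T = A - C3 / T" using Tp by (simp add: field_simps)
      ultimately show ?thesis unfolding T_def by simp
    qed
    have "density \<Phi>' X \<le> ereal A"
      unfolding density_def by (rule liminf_upper) (rule hX)
    also have "ereal A \<le> density \<Phi>' W"
      unfolding density_def by (rule liminf_lower) (rule hW)
    finally show "density \<Phi>' X \<le> density \<Phi>' W" .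
  qed
qed


end
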